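(* Let $\mathcal{A}_1,\mathcal{A}_2$ be tautological algebras with maximal ideals $\mathfrak{m}_1,\mathfrak{m}_2$, and let $M_1,M_2\in\mathrm{Mat}_{2n}(\mathbb{C})$ be their structure matrices with respect to symplectic bases $\{X^1_1,\dots,X^1_{2n},t_1\}$ of $\mathfrak{m}_1$ and $\{X^2_1,\dots,X^2_{2n},t_2\}$ of $\mathfrak{m}_2$. Then $\mathcal{A}_1\cong\mathcal{A}_2$ (as unital algebras) if and only if there exists an invertible matrix $C\in\mathrm{GL}_{2n}(\mathbb{C})$ with $M_1=C\,M_2\,C^t$.
   Context: Work over $\mathbb{C}$, $n\ge1$. The Heisenberg group $\mathbb{H}_{2n+1}$ is $\mathbb{W}\times\mathbb{C}$ ($\mathbb{W}$ a $2n$-dimensional space with non-degenerate skew form $\omega$) with law $(w_1,t_1)(w_2,t_2)=(w_1+w_2,t_1+t_2+\tfrac12\omega(w_1,w_2))$; $T=(0,1)$, $\mathbb{I}=\mathbb{C}T$ its center. An $\mathbb{H}_{2n+1}$-structure on $\mathbb{P}V$, $V\cong\mathbb{C}^{2n+2}$, is an effective algebraic action with dense open orbit; the boundary is a hyperplane $\mathbb{P}V'$. Viewing $\mathbb{H}_{2n+1}\subset\mathbb{P}\mathrm{GL}_{2n+2}(\mathbb{C})$ and $\pi:\mathrm{GL}_{2n+2}\to\mathbb{P}\mathrm{GL}_{2n+2}$ the projection, the associated algebra $\mathcal{A}$ is the unital subalgebra of $\mathrm{Mat}_{2n+2}(\mathbb{C})$ generated by $\pi^{-1}(\mathbb{H}_{2n+1})$.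 For $o$ in the open orbit let $v=\overline{\mathbb{I}\cdot o}\setminus\mathbb{I}\cdot o$, $\hat v$ a representative, $\widetilde V=V/\mathbb{C}\hat v$; if $T$ fixes $\mathbb{P}V'$ pointwise, the action descends to a $\mathbb{G}_a^{2n}$-structure of $\mathbb{H}_{2n+1}/\mathbb{I}$ on $\mathbb{P}\widetilde V$, called tautological if in suitable coordinates it is $(a_i)\cdot[z_0,\dots,z_{2n}]=[z_0,z_1+a_1z_0,\dots,z_{2n}+a_{2n}z_0]$. A tautological algebra is the associated algebra of an $\mathbb{H}_{2n+1}$-structure for which $T$ fixes the boundary pointwise and the induced structure is tautological. For such $\mathcal{A}$ one has $\mathcal{A}=\mathbb{C}I_{2n+2}\oplus\mathfrak{m}$, where the maximal ideal $\mathfrak{m}$ is the (matrix realization of the) Lie algebra of $\mathbb{H}_{2n+1}$, a Heisenberg Lie algebra with center $\mathbb{C}t$ under the commutator bracket. A symplectic basis of $\mathfrak{m}$ is a basis $X_1,\dots,X_{2n},t$ with $X_iX_j-X_jX_i=\omega(X_i,X_j)t$, where $\omega(X_i,X_{n+j})=\delta_{ij}$ and $\omega(X_i,X_j)=\omega(X_{n+i},X_{n+j})=0$ for $1\le i,j\le n$. In such a basis each product $X_iX_j$ lies in $\mathbb{C}t$, say $X_iX_j=a_{ij}t$, and the structure matrix is $M_{\mathcal{A}}=(a_{ij})\in\mathrm{Mat}_{2n}(\mathbb{C})$. *)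

theory Defs
  imports "Jordan_Normal_Form.Matrix"
begin

definition omega :: "nat \<Rightarrow> nat \<Rightarrow> nat \<Rightarrow> complex" where
  "omega n i j = (if i < n \<and> j = i + n then 1 else if j < n \<and> i = j + n then -1 else 0)"

definition omega_form :: "nat \<Rightarrow> complex vec \<Rightarrow> complex vec \<Rightarrow> complex" where
  "omega_form n w1 w2 = (\<Sum>i<2*n. \<Sum>j<2*n. omega n i j * w1 $ i * w2 $ j)"

definition heis :: "nat \<Rightarrow> (complex vec \<times> complex) set" where
  "heis n = {(w, s). w \<in> carrier_vec (2*n)}"

definition heis_mult :: "nat \<Rightarrow> complex vec \<times> complex \<Rightarrow> complex vec \<times> complex \<Rightarrow> complex vec \<times> complex" where
  "heis_mult n g h = (fst g + fst h, snd g + snd h + omega_form n (fst g) (fst h) / 2)"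

definition heis_one :: "nat \<Rightarrow> complex vec \<times> complex" where
  "heis_one n = (0\<^sub>v (2*n), 0)"

definition heis_T :: "nat \<Rightarrow> complex vec \<times> complex" where
  "heis_T n = (0\<^sub>v (2*n), 1)"

inductive_set poly_fun :: "((nat \<Rightarrow> complex) \<Rightarrow> complex) set" where
  pf_const: "(\<lambda>x. c) \<in> poly_fun"
| pf_var: "(\<lambda>x. x k) \<in> poly_fun"
| pf_add: "p \<in> poly_fun \<Longrightarrow> q \<in> poly_fun \<Longrightarrow> (\<lambda>x. p x + q x) \<in> poly_fun"
| pf_mult: "p \<in> poly_fun \<Longrightarrow> q \<in> poly_fun \<Longrightarrow> (\<lambda>x. p x * q x) \<in> poly_fun"

definition heis_coords :: "nat \<Rightarrow> complex vec \<times> complex \<Rightarrow> nat \<Rightarrow> complex" where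
  "heis_coords n g k = (if k < 2*n then fst g $ k else if k = 2*n then snd g else 0)"

definition vec_coords :: "nat \<Rightarrow> complex vec \<Rightarrow> nat \<Rightarrow> complex" where
  "vec_coords N v k = (if k < N then v $ k else 0)"

definition hom_poly :: "nat \<Rightarrow> nat \<Rightarrow> (complex vec \<Rightarrow> complex) \<Rightarrow> bool" where
  "hom_poly N d f \<longleftrightarrow>
     (\<exists>p \<in> poly_fun. \<forall>v \<in> carrier_vec N. f v = p (vec_coords N v)) \<and>
     (\<forall>c. \<forall>v \<in> carrier_vec N. f (c \<cdot>\<^sub>v v) = c ^ d * f v)"

section \<open>Zariski topology on P^{N-1}, via cones in C^N - {0}\<close>

definition punct :: "nat \<Rightarrow> complex vec set" where
  "punct N = carrier_vec N - {0\<^sub>v N}"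

definition zclosed :: "nat \<Rightarrow> complex vec set \<Rightarrow> bool" where
  "zclosed N S \<longleftrightarrow> (\<exists>F. (\<forall>f \<in> F. \<exists>d. hom_poly N d f) \<and>
                         S = {v \<in> punct N. \<forall>f \<in> F. f v = 0})"

definition zclosure :: "nat \<Rightarrow> complex vec set \<Rightarrow> complex vec set" where
  "zclosure N S = {v \<in> punct N. \<forall>f d. hom_poly N d f \<and> (\<forall>u \<in> S. f u = 0) \<longrightarrow> f v = 0}"

section \<open>H_{2n+1}-structures on P V, V = C^{2n+2}, given by a lift rho : H \<rightarrow> GL_{2n+2}\<close>

definition orbit_cone :: "(complex vec \<times> complex \<Rightarrow> complex mat) \<Rightarrow> (complex vec \<times> complex) set
     \<Rightarrow> complex vec \<Rightarrow> complex vec set" where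
  "orbit_cone \<rho> G x = {c \<cdot>\<^sub>v (\<rho> g *\<^sub>v x) | c g. c \<noteq> 0 \<and> g \<in> G}"

definition line :: "complex vec \<Rightarrow> complex vec set" where
  "line y = {c \<cdot>\<^sub>v y | c. c \<noteq> 0}"

text \<open>Algebraic projective action (a morphism H \<rightarrow> PGL lifts to a polynomial map H \<rightarrow> GL,
  since Pic of affine space is trivial), effective, with a dense open orbit.\<close>
definition heis_structure :: "nat \<Rightarrow> (complex vec \<times> complex \<Rightarrow> complex mat) \<Rightarrow> bool" where
  "heis_structure n \<rho> \<longleftrightarrow>
     (let N = 2*n+2 in
       (\<forall>g \<in> heis n. \<rho> g \<in> carrier_mat N N \<and> invertible_mat (\<rho> g)) \<and>
       (\<forall>i<N. \<forall>j<N. \<exists>p \<in> poly_fun. \<forall>g \<in> heis n. \<rho> g $$ (i,j) = p (heis_coords n g)) \<and>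
       (\<forall>g \<in> heis n. \<forall>h \<in> heis n. \<exists>c. c \<noteq> 0 \<and> \<rho> (heis_mult n g h) = c \<cdot>\<^sub>m (\<rho> g * \<rho> h)) \<and>
       (\<forall>g \<in> heis n. (\<exists>c. \<rho> g = c \<cdot>\<^sub>m 1\<^sub>m N) \<longrightarrow> g = heis_one n) \<and>
       (\<exists>x \<in> punct N. zclosed N (punct N - orbit_cone \<rho> (heis n) x) \<and>
                       zclosure N (orbit_cone \<rho> (heis n) x) = punct N))"

text \<open>Standard (tautological) G_a^{2n} action on P^{2n}:
  (a)[z_0,..,z_{2n}] = [z_0, z_1 + a_1 z_0, ..., z_{2n} + a_{2n} z_0].\<close>
definition taut_mat :: "nat \<Rightarrow> complex vec \<Rightarrow> complex mat" where
  "taut_mat n a = mat (2*n+1) (2*n+1)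
     (\<lambda>(i,j). if i = j then 1 else if j = 0 \<and> i \<ge> 1 then a $ (i - 1) else 0)"

text \<open>Tautological structure: the central element T fixes the boundary (complement of the
  open orbit) pointwise, v = closure(I.o) - I.o is a point [y], and, in a basis of V whose
  last vector is y, the induced action on V/Cy is (after a linear change of coordinates L
  of H/I = G_a^{2n}) the tautological one.\<close>
definition taut_structure :: "nat \<Rightarrow> (complex vec \<times> complex \<Rightarrow> complex mat) \<Rightarrow> bool" where
  "taut_structure n \<rho> \<longleftrightarrow> heis_structure n \<rho> \<and>
     (let N = 2*n+2 in
      \<exists>x \<in> punct N.
        zclosed N (punct N - orbit_cone \<rho> (heis n) x) \<and>
        zclosure N (orbit_cone \<rho> (heis n) x) = punct N \<and>
        (\<forall>v \<in> punct N - orbit_cone \<rho> (heis n) x. \<exists>c. \<rho> (heis_T n) *\<^sub>v v = c \<cdot>\<^sub>v v) \<and>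
        (\<exists>y \<in> punct N.
           zclosure N (orbit_cone \<rho> {(0\<^sub>v (2*n), s) | s. True} x)
             - orbit_cone \<rho> {(0\<^sub>v (2*n), s) | s. True} x = line y \<and>
           (\<exists>Q Qi L. Q \<in> carrier_mat N N \<and> Qi \<in> carrier_mat N N \<and>
              Q * Qi = 1\<^sub>m N \<and> Qi * Q = 1\<^sub>m N \<and> Q *\<^sub>v unit_vec N (N - 1) = y \<and>
              L \<in> carrier_mat (2*n) (2*n) \<and> invertible_mat L \<and>
              (\<forall>g \<in> heis n. let R = Qi * \<rho> g * Q in
                 (\<forall>i < N - 1. R $$ (i, N - 1) = 0) \<and>
                 (\<exists>c. c \<noteq> 0 \<and> (\<forall>i < N - 1. \<forall>j < N - 1.
                        R $$ (i,j) = c * taut_mat n (L *\<^sub>v fst g) $$ (i,j)))))))"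

inductive_set alg_gen :: "nat \<Rightarrow> complex mat set \<Rightarrow> complex mat set" for N S where
  ag_one: "1\<^sub>m N \<in> alg_gen N S"
| ag_gen: "a \<in> S \<Longrightarrow> a \<in> alg_gen N S"
| ag_add: "a \<in> alg_gen N S \<Longrightarrow> b \<in> alg_gen N S \<Longrightarrow> a + b \<in> alg_gen N S"
| ag_smult: "a \<in> alg_gen N S \<Longrightarrow> c \<cdot>\<^sub>m a \<in> alg_gen N S"
| ag_mult: "a \<in> alg_gen N S \<Longrightarrow> b \<in> alg_gen N S \<Longrightarrow> a * b \<in> alg_gen N S"

definition assoc_alg :: "nat \<Rightarrow> (complex vec \<times> complex \<Rightarrow> complex mat) \<Rightarrow> complex mat set" where
  "assoc_alg n \<rho> = alg_gen (2*n+2) {c \<cdot>\<^sub>m \<rho> g | c g. c \<noteq> 0 \<and> g \<in> heis n}"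

definition tautological_algebra :: "nat \<Rightarrow> complex mat set \<Rightarrow> bool" where
  "tautological_algebra n A \<longleftrightarrow> (\<exists>\<rho>. taut_structure n \<rho> \<and> A = assoc_alg n \<rho>)"

definition two_sided_ideal :: "nat \<Rightarrow> complex mat set \<Rightarrow> complex mat set \<Rightarrow> bool" where
  "two_sided_ideal N A I \<longleftrightarrow> I \<subseteq> A \<and> 0\<^sub>m N N \<in> I \<and>
     (\<forall>a \<in> I. \<forall>b \<in> I. a + b \<in> I) \<and> (\<forall>c. \<forall>a \<in> I. c \<cdot>\<^sub>m a \<in> I) \<and>
     (\<forall>x \<in> A. \<forall>a \<in> I. x * a \<in> I \<and> a * x \<in> I)"

definition maximal_ideal :: "nat \<Rightarrow> complex mat set \<Rightarrow> complex mat set \<Rightarrow> bool" where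
  "maximal_ideal N A m \<longleftrightarrow> two_sided_ideal N A m \<and> m \<noteq> A \<and>
     (\<forall>J. two_sided_ideal N A J \<and> m \<subseteq> J \<longrightarrow> J = m \<or> J = A)"

fun msum :: "nat \<Rightarrow> (nat \<Rightarrow> complex mat) \<Rightarrow> nat \<Rightarrow> complex mat" where
  "msum N f 0 = 0\<^sub>m N N"
| "msum N f (Suc k) = msum N f k + f k"

definition symplectic_basis :: "nat \<Rightarrow> complex mat set \<Rightarrow> (nat \<Rightarrow> complex mat) \<Rightarrow> complex mat \<Rightarrow> bool" where
  "symplectic_basis n m X t \<longleftrightarrow>
     (let N = 2*n+2 in
       (\<forall>i < 2*n. X i \<in> carrier_mat N N) \<and> t \<in> carrier_mat N N \<and>
       (\<forall>c d. msum N (\<lambda>i. c i \<cdot>\<^sub>m X i) (2*n) + d \<cdot>\<^sub>m t = 0\<^sub>m N N \<longrightarrow>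
              (\<forall>i < 2*n. c i = 0) \<and> d = 0) \<and>
       m = {msum N (\<lambda>i. c i \<cdot>\<^sub>m X i) (2*n) + d \<cdot>\<^sub>m t | c d. True} \<and>
       (\<forall>i < 2*n. \<forall>j < 2*n. X i * X j - X j * X i = omega n i j \<cdot>\<^sub>m t))"

definition structure_matrix :: "nat \<Rightarrow> (nat \<Rightarrow> complex mat) \<Rightarrow> complex mat \<Rightarrow> complex mat \<Rightarrow> bool" where
  "structure_matrix n X t M \<longleftrightarrow> M \<in> carrier_mat (2*n) (2*n) \<and>
     (\<forall>i < 2*n. \<forall>j < 2*n. X i * X j = M $$ (i,j) \<cdot>\<^sub>m t)"

definition alg_iso :: "nat \<Rightarrow> complex mat set \<Rightarrow> complex mat set \<Rightarrow> bool" where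
  "alg_iso N A B \<longleftrightarrow> (\<exists>\<phi>. bij_betw \<phi> A B \<and> \<phi> (1\<^sub>m N) = 1\<^sub>m N \<and>
     (\<forall>x \<in> A. \<forall>y \<in> A. \<phi> (x + y) = \<phi> x + \<phi> y \<and> \<phi> (x * y) = \<phi> x * \<phi> y) \<and>
     (\<forall>c. \<forall>x \<in> A. \<phi> (c \<cdot>\<^sub>m x) = c \<cdot>\<^sub>m \<phi> x))"

end

theory Submission
  imports Defs "Jordan_Normal_Form.Determinant"
begin


lemma msum_carrier: "(\<And>i. i < k \<Longrightarrow> f i \<in> carrier_mat N N) \<Longrightarrow> msum N f k \<in> carrier_mat N N"
  by (induction k) auto

lemma msum_cong: "(\<And>i. i < k \<Longrightarrow> f i = g i) \<Longrightarrow> msum N f k = msum N g k"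
  by (induction k) auto

lemma msum_index: "(\<And>i. i < k \<Longrightarrow> f i \<in> carrier_mat N N) \<Longrightarrow> a < N \<Longrightarrow> b < N \<Longrightarrow>
   msum N f k $$ (a,b) = (\<Sum>l<k. f l $$ (a,b))"
proof (induction k)
  case 0 then show ?case by simp
next
  case (Suc k)
  have c: "msum N f k \<in> carrier_mat N N" by (rule msum_carrier) (use Suc in auto)
  have "f k \<in> carrier_mat N N" using Suc by auto
  then have "dim_row (f k) = N" "dim_col (f k) = N" by auto
  then show ?case using Suc c by simp
qed

lemma msum_mult_right: "(\<And>i. i < k \<Longrightarrow> f i \<in> carrier_mat N N) \<Longrightarrow> Y \<in> carrier_mat N N \<Longrightarrow>
   msum N f k * Y = msum N (\<lambda>i. f i * Y) k"
proof (induction k)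
  case 0 then show ?case by auto
next
  case (Suc k)
  have c: "msum N f k \<in> carrier_mat N N" by (rule msum_carrier) (use Suc in auto)
  have "f k \<in> carrier_mat N N" using Suc by auto
  then show ?case using Suc c by (simp add: add_mult_distrib_mat)
qed

lemma msum_mult_left: "(\<And>i. i < k \<Longrightarrow> f i \<in> carrier_mat N N) \<Longrightarrow> Y \<in> carrier_mat N N \<Longrightarrow>
   Y * msum N f k = msum N (\<lambda>i. Y * f i) k"
proof (induction k)
  case 0 then show ?case by auto
next
  case (Suc k)
  have c: "msum N f k \<in> carrier_mat N N" by (rule msum_carrier) (use Suc in auto)
  have "f k \<in> carrier_mat N N" using Suc by auto
  then show ?case using Suc c by (simp add: mult_add_distrib_mat)
qed

lemma msum_closed: "0\<^sub>m N N \<in> S \<Longrightarrow> (\<And>a b. a \<in> S \<Longrightarrow> b \<in> S \<Longrightarrow> a + b \<in> S) \<Longrightarrow>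
   (\<And>i. i < k \<Longrightarrow> f i \<in> S) \<Longrightarrow> msum N f k \<in> S"
  by (induction k) auto

lemma msum_delta: "i < k \<Longrightarrow> f i \<in> carrier_mat N N \<Longrightarrow> (\<And>j. j < k \<Longrightarrow> j \<noteq> i \<Longrightarrow> f j = 0\<^sub>m N N)
  \<Longrightarrow> msum N f k = f i"
proof (induction k)
  case 0 then show ?case by simp
next
  case (Suc k)
  show ?case
  proof (cases "i = k")
    case True
    have "msum N f k \<in> {0\<^sub>m N N}"
      by (rule msum_closed[where S="{0\<^sub>m N N}"]) (use Suc True in auto)
    then show ?thesis using True Suc by simp
  next
    case False
    then have "msum N f k = f i" using Suc by auto
    moreover have "f k = 0\<^sub>m N N" using Suc False by auto
    ultimately show ?thesis using Suc by simp
  qed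
qed


lemma smult0_mat: "A \<in> carrier_mat nr nc \<Longrightarrow> (0::'a::semiring_0) \<cdot>\<^sub>m A = 0\<^sub>m nr nc"
  by (rule eq_matI) auto
lemma smult1_mat[simp]: "(1::'a::monoid_mult) \<cdot>\<^sub>m A = A"
  by (rule eq_matI) auto

definition linc :: "nat \<Rightarrow> (nat \<Rightarrow> complex mat) \<Rightarrow> complex vec \<Rightarrow> complex mat" where
  "linc n X v = msum (2*n+2) (\<lambda>i. v $ i \<cdot>\<^sub>m X i) (2*n)"

definition Ec :: "nat \<Rightarrow> (nat \<Rightarrow> complex mat) \<Rightarrow> complex mat \<Rightarrow> complex \<Rightarrow> complex vec \<Rightarrow> complex \<Rightarrow> complex mat" where
  "Ec n X t c v d = c \<cdot>\<^sub>m 1\<^sub>m (2*n+2) + linc n X v + d \<cdot>\<^sub>m t"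

locale halg =
  fixes n :: nat and A m :: "complex mat set" and X :: "nat \<Rightarrow> complex mat" and t M :: "complex mat"
  assumes n1: "n \<ge> 1"
    and sb: "symplectic_basis n m X t"
    and sm: "structure_matrix n X t M"
    and idl: "two_sided_ideal (2*n+2) A m"
    and one_notin: "1\<^sub>m (2*n+2) \<notin> m"
    and A_eq: "A = {c \<cdot>\<^sub>m 1\<^sub>m (2*n+2) + w | c w. w \<in> m}"
    and m3: "\<forall>a\<in>m. \<forall>b\<in>m. \<forall>c\<in>m. a * b * c = 0\<^sub>m (2*n+2) (2*n+2)"
begin

lemma Xc: "i < 2*n \<Longrightarrow> X i \<in> carrier_mat (2*n+2) (2*n+2)"
  using sb unfolding symplectic_basis_def Let_def by auto
lemma tc: "t \<in> carrier_mat (2*n+2) (2*n+2)"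
  using sb unfolding symplectic_basis_def Let_def by auto
lemma indep: "msum (2*n+2) (\<lambda>i. c i \<cdot>\<^sub>m X i) (2*n) + d \<cdot>\<^sub>m t = 0\<^sub>m (2*n+2) (2*n+2) \<Longrightarrow>
   (\<forall>i < 2*n. c i = 0) \<and> d = 0"
  using sb unfolding symplectic_basis_def Let_def by blast
lemma m_def: "m = {msum (2*n+2) (\<lambda>i. c i \<cdot>\<^sub>m X i) (2*n) + d \<cdot>\<^sub>m t | c d. True}"
  using sb unfolding symplectic_basis_def Let_def by blast
lemma comm: "i < 2*n \<Longrightarrow> j < 2*n \<Longrightarrow> X i * X j - X j * X i = omega n i j \<cdot>\<^sub>m t"
  using sb unfolding symplectic_basis_def Let_def by blast
lemma XX: "i < 2*n \<Longrightarrow> j < 2*n \<Longrightarrow> X i * X j = M $$ (i,j) \<cdot>\<^sub>m t"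
  using sm unfolding structure_matrix_def by blast
lemma Mc: "M \<in> carrier_mat (2*n) (2*n)"
  using sm unfolding structure_matrix_def by blast

lemma Xdim[simp]: "i < 2*n \<Longrightarrow> dim_row (X i) = 2*n+2" "i < 2*n \<Longrightarrow> dim_col (X i) = 2*n+2"
  using Xc by auto
lemma tdim[simp]: "dim_row t = 2*n+2" "dim_col t = 2*n+2"
  using tc by auto

lemma m_sub_A: "m \<subseteq> A" using idl unfolding two_sided_ideal_def by blast
lemma m_add: "a \<in> m \<Longrightarrow> b \<in> m \<Longrightarrow> a + b \<in> m" using idl unfolding two_sided_ideal_def by blast
lemma m_smult: "a \<in> m \<Longrightarrow> c \<cdot>\<^sub>m a \<in> m" using idl unfolding two_sided_ideal_def by blast

lemma lin_carrier: "linc n X v \<in> carrier_mat (2*n+2) (2*n+2)"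
  unfolding linc_def by (rule msum_carrier) (use Xc in auto)

lemma lin_index: "a < 2*n+2 \<Longrightarrow> b < 2*n+2 \<Longrightarrow> linc n X v $$ (a,b) = (\<Sum>i<2*n. v $ i * X i $$ (a,b))"
  unfolding linc_def
  apply (subst msum_index[where N="2*n+2"])
  using Xc by (auto intro!: sum.cong)

lemma lin_dim[simp]: "dim_row (linc n X v) = 2*n+2" "dim_col (linc n X v) = 2*n+2"
  using lin_carrier by auto

lemma E_carrier: "Ec n X t c v d \<in> carrier_mat (2*n+2) (2*n+2)"
  unfolding Ec_def using lin_carrier tc by auto

lemma E_dim[simp]: "dim_row (Ec n X t c v d) = 2*n+2" "dim_col (Ec n X t c v d) = 2*n+2"
  using E_carrier by auto

lemma E_index: "a < 2*n+2 \<Longrightarrow> b < 2*n+2 \<Longrightarrow> Ec n X t c v d $$ (a,b) =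
   c * (if a = b then 1 else 0) + (\<Sum>i<2*n. v $ i * X i $$ (a,b)) + d * t $$ (a,b)"
  unfolding Ec_def by (simp add: lin_index)

lemma in_m_I: "msum (2*n+2) (\<lambda>i. c i \<cdot>\<^sub>m X i) (2*n) + d \<cdot>\<^sub>m t \<in> m"
  unfolding m_def by blast

lemma X_in_m: "i < 2*n \<Longrightarrow> X i \<in> m"
proof -
  assume i: "i < 2*n"
  have "msum (2*n+2) (\<lambda>j. (if j = i then 1 else 0) \<cdot>\<^sub>m X j) (2*n) = (if i = i then 1 else 0) \<cdot>\<^sub>m X i"
    by (rule msum_delta) (use i Xc in \<open>auto intro: smult0_mat\<close>)
  then have "msum (2*n+2) (\<lambda>j. (if j = i then 1 else 0) \<cdot>\<^sub>m X j) (2*n) = X i" by simp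
  then have "X i = msum (2*n+2) (\<lambda>j. (if j = i then 1 else 0) \<cdot>\<^sub>m X j) (2*n) + 0 \<cdot>\<^sub>m t"
    using i by (intro eq_matI) auto
  then show ?thesis using in_m_I[of "\<lambda>j. if j = i then 1 else 0" 0] by simp
qed

lemma t_in_m: "t \<in> m"
proof -
  have "msum (2*n+2) (\<lambda>j. 0 \<cdot>\<^sub>m X j) (2*n) \<in> {0\<^sub>m (2*n+2) (2*n+2)}"
    by (rule msum_closed) (use Xc in \<open>auto intro: smult0_mat\<close>)
  then have "t = msum (2*n+2) (\<lambda>j. 0 \<cdot>\<^sub>m X j) (2*n) + 1 \<cdot>\<^sub>m t"
    by (intro eq_matI) auto
  then show ?thesis using in_m_I[of "\<lambda>j. 0" 1] by simp
qed

lemma lin_t_in_m: "linc n X v + d \<cdot>\<^sub>m t \<in> m"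
  unfolding m_def linc_def by blast

lemma E0: "Ec n X t 0 v d = linc n X v + d \<cdot>\<^sub>m t"
  unfolding Ec_def by (rule eq_matI) auto

lemma E0_in_m: "Ec n X t 0 v d \<in> m"
  using E0 lin_t_in_m by simp

lemma E_in_A: "Ec n X t c v d \<in> A"
proof -
  have "Ec n X t c v d = c \<cdot>\<^sub>m 1\<^sub>m (2*n+2) + (linc n X v + d \<cdot>\<^sub>m t)"
    unfolding Ec_def by (intro eq_matI) auto
  then show ?thesis unfolding A_eq using lin_t_in_m by blast
qed

lemma m_E: "w \<in> m \<Longrightarrow> \<exists>v d. v \<in> carrier_vec (2*n) \<and> w = Ec n X t 0 v d"
proof -
  assume "w \<in> m"
  then obtain c d where w: "w = msum (2*n+2) (\<lambda>i. c i \<cdot>\<^sub>m X i) (2*n) + d \<cdot>\<^sub>m t"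
    unfolding m_def by blast
  have "linc n X (vec (2*n) c) = msum (2*n+2) (\<lambda>i. c i \<cdot>\<^sub>m X i) (2*n)"
    unfolding linc_def by (rule msum_cong) simp
  then have "w = Ec n X t 0 (vec (2*n) c) d" using w E0 by simp
  then show ?thesis by (metis vec_carrier)
qed

lemma A_E: "z \<in> A \<Longrightarrow> \<exists>c v d. v \<in> carrier_vec (2*n) \<and> z = Ec n X t c v d"
proof -
  assume "z \<in> A"
  then obtain c w where z: "z = c \<cdot>\<^sub>m 1\<^sub>m (2*n+2) + w" and w: "w \<in> m" unfolding A_eq by blast
  obtain v d where v: "v \<in> carrier_vec (2*n)" and wv: "w = Ec n X t 0 v d" using m_E[OF w] by blast
  have "z = Ec n X t c v d"
    unfolding z wv E0 unfolding Ec_def by (intro eq_matI) auto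
  then show ?thesis using v by blast
qed

lemma E_add: "v \<in> carrier_vec (2*n) \<Longrightarrow> v' \<in> carrier_vec (2*n) \<Longrightarrow>
   Ec n X t c v d + Ec n X t c' v' d' = Ec n X t (c+c') (v+v') (d+d')"
  apply (rule eq_matI)
  using E_carrier[of c v d] E_carrier[of c' v' d'] E_carrier[of "c+c'" "v+v'" "d+d'"]
  apply (simp_all add: carrier_matD E_index)
  apply (simp add: algebra_simps sum.distrib)
  done



end

lemma solve_lin: "(c::complex) \<noteq> 0 \<Longrightarrow> c * x + y + z = 0 \<Longrightarrow> x = (-1/c) * (y + z)"
  by (simp add: field_simps) (metis add_eq_0_iff)

lemma diff_zero_lin: "(x::complex) = y \<Longrightarrow> w = x - y \<Longrightarrow> w = 0" by simp

lemma lin3: "((c::complex) - c')*D + (S - S') + (d - d')*T = (c*D + S + d*T) - (c'*D + S' + d'*T)"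
  by (simp add: algebra_simps)

lemma expand9:
  fixes P P' T :: "'a::comm_ring_1 mat"
  assumes P: "P \<in> carrier_mat N N" and P': "P' \<in> carrier_mat N N" and T: "T \<in> carrier_mat N N"
  shows "(c \<cdot>\<^sub>m 1\<^sub>m N + P + d \<cdot>\<^sub>m T) * (c' \<cdot>\<^sub>m 1\<^sub>m N + P' + d' \<cdot>\<^sub>m T) =
    (c*c') \<cdot>\<^sub>m 1\<^sub>m N + c \<cdot>\<^sub>m P' + c' \<cdot>\<^sub>m P + (c*d') \<cdot>\<^sub>m T + (c'*d) \<cdot>\<^sub>m T + P * P'
     + d' \<cdot>\<^sub>m (P * T) + d \<cdot>\<^sub>m (T * P') + (d*d') \<cdot>\<^sub>m (T * T)"
proof -
  let ?L = "c \<cdot>\<^sub>m 1\<^sub>m N + P + d \<cdot>\<^sub>m T"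
  have L: "?L \<in> carrier_mat N N" using P T by auto
  have "?L * (c' \<cdot>\<^sub>m 1\<^sub>m N + P' + d' \<cdot>\<^sub>m T) = ?L * (c' \<cdot>\<^sub>m 1\<^sub>m N + P') + ?L * (d' \<cdot>\<^sub>m T)"
    by (rule mult_add_distrib_mat[OF L]) (use P' T in auto)
  also have "?L * (c' \<cdot>\<^sub>m 1\<^sub>m N + P') = ?L * (c' \<cdot>\<^sub>m 1\<^sub>m N) + ?L * P'"
    by (rule mult_add_distrib_mat[OF L]) (use P' T in auto)
  also have "?L * (c' \<cdot>\<^sub>m 1\<^sub>m N) = c' \<cdot>\<^sub>m ?L"
    by (simp add: mult_smult_distrib[OF L one_carrier_mat] right_mult_one_mat[OF L])
  also have "?L * (d' \<cdot>\<^sub>m T) = d' \<cdot>\<^sub>m (?L * T)"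
    by (simp add: mult_smult_distrib[OF L T])
  also have "?L * T = c \<cdot>\<^sub>m T + P * T + d \<cdot>\<^sub>m (T * T)"
    using P T by (simp add: add_mult_distrib_mat[of _ N N] mult_smult_assoc_mat[of _ N N])
  also have "?L * P' = c \<cdot>\<^sub>m P' + P * P' + d \<cdot>\<^sub>m (T * P')"
    using P P' T by (simp add: add_mult_distrib_mat[of _ N N] mult_smult_assoc_mat[of _ N N])
  finally show ?thesis
    using P P' T by (intro eq_matI) (auto simp: algebra_simps)
qed

context halg begin

lemma E_smult: "v \<in> carrier_vec (2*n) \<Longrightarrow> a \<cdot>\<^sub>m Ec n X t c v d = Ec n X t (a*c) (a \<cdot>\<^sub>v v) (a*d)"
  apply (rule eq_matI)
   apply (simp_all add: E_index)
  apply (simp add: algebra_simps sum_distrib_left)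
  done

lemma m_carrier: "w \<in> m \<Longrightarrow> w \<in> carrier_mat (2*n+2) (2*n+2)"
  using m_E E_carrier by blast

lemma A_carrier: "z \<in> A \<Longrightarrow> z \<in> carrier_mat (2*n+2) (2*n+2)"
  using A_E E_carrier by blast

lemma E_zero: assumes v: "v \<in> carrier_vec (2*n)" and E: "Ec n X t c v d = 0\<^sub>m (2*n+2) (2*n+2)"
  shows "c = 0 \<and> v = 0\<^sub>v (2*n) \<and> d = 0"
proof -
  have c: "c = 0"
  proof (rule ccontr)
    assume c: "c \<noteq> 0"
    have "1\<^sub>m (2*n+2) = (- 1 / c) \<cdot>\<^sub>m (linc n X v + d \<cdot>\<^sub>m t)"
    proof (rule eq_matI)
      fix a b assume ab: "a < dim_row ((- 1 / c) \<cdot>\<^sub>m (linc n X v + d \<cdot>\<^sub>m t))"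
        "b < dim_col ((- 1 / c) \<cdot>\<^sub>m (linc n X v + d \<cdot>\<^sub>m t))"
      then have ab': "a < 2*n+2" "b < 2*n+2" by auto
      have "Ec n X t c v d $$ (a,b) = 0" using E ab' by simp
      then have "c * (if a = b then 1 else 0) + linc n X v $$ (a,b) + d * t $$ (a,b) = 0"
        using ab' by (simp add: E_index lin_index)
      from solve_lin[OF c this]
      show "1\<^sub>m (2*n+2) $$ (a,b) = ((- 1 / c) \<cdot>\<^sub>m (linc n X v + d \<cdot>\<^sub>m t)) $$ (a,b)"
        using ab' by simp
    qed auto
    then have "1\<^sub>m (2*n+2) \<in> m" using m_smult lin_t_in_m by simp
    then show False using one_notin by simp
  qed
  then have "msum (2*n+2) (\<lambda>i. v $ i \<cdot>\<^sub>m X i) (2*n) + d \<cdot>\<^sub>m t = 0\<^sub>m (2*n+2) (2*n+2)"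
    using E E0 unfolding linc_def by simp
  from indep[OF this] have "\<forall>i<2*n. v $ i = 0" "d = 0" by auto
  then show ?thesis using c v by auto
qed

lemma E_inj: assumes v: "v \<in> carrier_vec (2*n)" and v': "v' \<in> carrier_vec (2*n)"
  and E: "Ec n X t c v d = Ec n X t c' v' d'"
  shows "c = c' \<and> v = v' \<and> d = d'"
proof -
  have "Ec n X t (c - c') (v - v') (d - d') = 0\<^sub>m (2*n+2) (2*n+2)"
  proof (rule eq_matI)
    fix a b assume "a < dim_row (0\<^sub>m (2*n+2) (2*n+2) :: complex mat)" "b < dim_col (0\<^sub>m (2*n+2) (2*n+2) :: complex mat)"
    then have ab: "a < 2*n+2" "b < 2*n+2" by auto
    have "Ec n X t c v d $$ (a,b) = Ec n X t c' v' d' $$ (a,b)" using E by simp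
    then have h1: "c * (if a = b then 1 else 0) + (\<Sum>i<2*n. v $ i * X i $$ (a,b)) + d * t $$ (a,b) =
        c' * (if a = b then 1 else 0) + (\<Sum>i<2*n. v' $ i * X i $$ (a,b)) + d' * t $$ (a,b)"
      using ab by (simp add: E_index)
    have h2: "(\<Sum>i<2*n. (v - v') $ i * X i $$ (a,b)) = (\<Sum>i<2*n. v $ i * X i $$ (a,b)) - (\<Sum>i<2*n. v' $ i * X i $$ (a,b))"
      using v v' by (simp add: sum_subtractf[symmetric] algebra_simps)
    define S where "S = (\<Sum>i<2*n. v $ i * X i $$ (a,b))"
    define S' where "S' = (\<Sum>i<2*n. v' $ i * X i $$ (a,b))"
    have h3: "Ec n X t (c - c') (v - v') (d - d') $$ (a,b) = (c - c') * (if a = b then 1 else 0) + (S - S') + (d - d') * t $$ (a,b)"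
      using ab h2 unfolding S_def S'_def by (simp add: E_index)
    have "Ec n X t (c - c') (v - v') (d - d') $$ (a,b) = 0"
      by (rule diff_zero_lin[OF h1[folded S_def S'_def] trans[OF h3 lin3]])
    then show "Ec n X t (c - c') (v - v') (d - d') $$ (a,b) = 0\<^sub>m (2*n+2) (2*n+2) $$ (a,b)"
      using ab by simp
  qed auto
  from E_zero[OF _ this] v v' have "c - c' = 0" "v - v' = 0\<^sub>v (2*n)" "d - d' = 0" by auto
  moreover have "v = v'"
  proof (rule eq_vecI)
    fix i assume "i < dim_vec v'"
    then have i: "i < 2*n" using v' by auto
    have "(v - v') $ i = 0" using \<open>v - v' = 0\<^sub>v (2*n)\<close> i by simp
    then show "v $ i = v' $ i" using i v v' by simp
  qed (use v v' in auto)
  ultimately show ?thesis by simp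
qed

lemma t_eq: "t = X 0 * X n - X n * X 0"
proof -
  have "X 0 * X n - X n * X 0 = omega n 0 n \<cdot>\<^sub>m t" using comm[of 0 n] n1 by simp
  also have "omega n 0 n = 1" using n1 unfolding omega_def by simp
  finally show ?thesis by simp
qed

lemma m_t: assumes w: "w \<in> m" shows "w * t = 0\<^sub>m (2*n+2) (2*n+2)" "t * w = 0\<^sub>m (2*n+2) (2*n+2)"
proof -
  have X0: "X 0 \<in> carrier_mat (2*n+2) (2*n+2)" "X 0 \<in> m" using Xc X_in_m n1 by auto
  have Xn: "X n \<in> carrier_mat (2*n+2) (2*n+2)" "X n \<in> m" using Xc X_in_m n1 by auto
  have wc: "w \<in> carrier_mat (2*n+2) (2*n+2)" using m_carrier w by simp
  have "w * t = w * (X 0 * X n) - w * (X n * X 0)"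
    unfolding t_eq by (rule mult_minus_distrib_mat[OF wc]) (use X0 Xn in auto)
  also have "\<dots> = w * X 0 * X n - w * X n * X 0" using X0 Xn wc by simp
  also have "\<dots> = 0\<^sub>m (2*n+2) (2*n+2)" using m3 w X0 Xn by simp
  finally show "w * t = 0\<^sub>m (2*n+2) (2*n+2)" .
  have "t * w = X 0 * X n * w - X n * X 0 * w"
    unfolding t_eq by (rule minus_mult_distrib_mat[OF _ _ wc]) (use X0 Xn in auto)
  also have "\<dots> = 0\<^sub>m (2*n+2) (2*n+2)" using m3 w X0 Xn by simp
  finally show "t * w = 0\<^sub>m (2*n+2) (2*n+2)" .
qed

end

lemma smult_smult_mat: "a \<cdot>\<^sub>m (b \<cdot>\<^sub>m A) = (a*b) \<cdot>\<^sub>m (A :: 'a::semigroup_mult mat)"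
  by (rule eq_matI) (auto simp: mult.assoc)

lemma msum_smult: "T \<in> carrier_mat N N \<Longrightarrow> msum N (\<lambda>j. a j \<cdot>\<^sub>m T) k = (\<Sum>j<k. a j) \<cdot>\<^sub>m (T :: complex mat)"
proof (induction k)
  case 0 then show ?case by (simp add: smult0_mat)
next
  case (Suc k) then show ?case by (simp add: add_smult_distrib_right_mat)
qed

context halg begin

lemma lin0t: "Ec n X t 0 v 0 = linc n X v"
  unfolding Ec_def by (rule eq_matI) auto

lemma X_lin: assumes i: "i < 2*n" and v': "v' \<in> carrier_vec (2*n)"
  shows "X i * linc n X v' = (\<Sum>j<2*n. M $$ (i,j) * v' $ j) \<cdot>\<^sub>m t"
proof -
  have "X i * linc n X v' = msum (2*n+2) (\<lambda>j. X i * (v' $ j \<cdot>\<^sub>m X j)) (2*n)"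
    unfolding linc_def by (rule msum_mult_left) (use Xc i in auto)
  also have "\<dots> = msum (2*n+2) (\<lambda>j. (M $$ (i,j) * v' $ j) \<cdot>\<^sub>m t) (2*n)"
  proof (rule msum_cong)
    fix j assume j: "j < 2*n"
    have "X i * (v' $ j \<cdot>\<^sub>m X j) = v' $ j \<cdot>\<^sub>m (X i * X j)"
      by (rule mult_smult_distrib[OF Xc[OF i] Xc[OF j]])
    then show "X i * (v' $ j \<cdot>\<^sub>m X j) = (M $$ (i,j) * v' $ j) \<cdot>\<^sub>m t"
      using XX[OF i j] by (simp add: smult_smult_mat mult.commute)
  qed
  also have "\<dots> = (\<Sum>j<2*n. M $$ (i,j) * v' $ j) \<cdot>\<^sub>m t"
    by (rule msum_smult[OF tc])
  finally show ?thesis .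
qed

lemma lin_mult: assumes v: "v \<in> carrier_vec (2*n)" and v': "v' \<in> carrier_vec (2*n)"
  shows "linc n X v * linc n X v' = (v \<bullet> (M *\<^sub>v v')) \<cdot>\<^sub>m t"
proof -
  have "linc n X v * linc n X v' = msum (2*n+2) (\<lambda>i. (v $ i \<cdot>\<^sub>m X i) * linc n X v') (2*n)"
    unfolding linc_def[of n X v] by (rule msum_mult_right) (use Xc lin_carrier in auto)
  also have "\<dots> = msum (2*n+2) (\<lambda>i. (v $ i * (\<Sum>j<2*n. M $$ (i,j) * v' $ j)) \<cdot>\<^sub>m t) (2*n)"
    by (rule msum_cong) (simp add: mult_smult_assoc_mat[OF Xc lin_carrier] X_lin v' smult_smult_mat)
  also have "\<dots> = (v \<bullet> (M *\<^sub>v v')) \<cdot>\<^sub>m t"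
  proof -
    have r: "(M *\<^sub>v v') $ i = (\<Sum>j<2*n. M $$ (i,j) * v' $ j)" if i: "i < 2*n" for i
    proof -
      have "(M *\<^sub>v v') $ i = row M i \<bullet> v'" using Mc i by simp
      also have "\<dots> = (\<Sum>j<2*n. M $$ (i,j) * v' $ j)"
        unfolding scalar_prod_def using Mc v' i by (auto simp: lessThan_atLeast0 intro!: sum.cong)
      finally show ?thesis .
    qed
    have sp: "v \<bullet> (M *\<^sub>v v') = (\<Sum>i<2*n. v $ i * (\<Sum>j<2*n. M $$ (i,j) * v' $ j))"
      unfolding scalar_prod_def using Mc r by (auto simp: lessThan_atLeast0 intro!: sum.cong)
    show ?thesis unfolding sp by (rule msum_smult[OF tc])
  qed
  finally show ?thesis .
qed

lemma lin_t: "linc n X v * t = 0\<^sub>m (2*n+2) (2*n+2)" "t * linc n X v = 0\<^sub>m (2*n+2) (2*n+2)"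
  "t * t = 0\<^sub>m (2*n+2) (2*n+2)"
  using m_t[OF E0_in_m[of v 0]] m_t[OF t_in_m] lin0t[of v] by auto

lemma E_mult: assumes v: "v \<in> carrier_vec (2*n)" and v': "v' \<in> carrier_vec (2*n)"
  shows "Ec n X t c v d * Ec n X t c' v' d' =
    Ec n X t (c*c') (c \<cdot>\<^sub>v v' + c' \<cdot>\<^sub>v v) (c*d' + c'*d + v \<bullet> (M *\<^sub>v v'))"
proof -
  have "Ec n X t c v d * Ec n X t c' v' d' =
    (c*c') \<cdot>\<^sub>m 1\<^sub>m (2*n+2) + c \<cdot>\<^sub>m linc n X v' + c' \<cdot>\<^sub>m linc n X v + (c*d') \<cdot>\<^sub>m t + (c'*d) \<cdot>\<^sub>m t
     + linc n X v * linc n X v' + d' \<cdot>\<^sub>m (linc n X v * t) + d \<cdot>\<^sub>m (t * linc n X v') + (d*d') \<cdot>\<^sub>m (t * t)"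
    unfolding Ec_def by (rule expand9[OF lin_carrier lin_carrier tc])
  also have "\<dots> = Ec n X t (c*c') (c \<cdot>\<^sub>v v' + c' \<cdot>\<^sub>v v) (c*d' + c'*d + v \<bullet> (M *\<^sub>v v'))"
    unfolding lin_t lin_mult[OF v v']
    apply (rule eq_matI)
    using v v' by (auto simp: E_index lin_index algebra_simps sum.distrib sum_distrib_left)
  finally show ?thesis .
qed

end


definition crd :: "nat \<Rightarrow> (nat \<Rightarrow> complex mat) \<Rightarrow> complex mat \<Rightarrow> complex mat \<Rightarrow> complex \<times> complex vec \<times> complex" where
  "crd n X t z = (SOME p. fst (snd p) \<in> carrier_vec (2*n) \<and> z = Ec n X t (fst p) (fst (snd p)) (snd (snd p)))"

context halg begin

lemma crd_E: assumes v: "v \<in> carrier_vec (2*n)" shows "crd n X t (Ec n X t c v d) = (c, v, d)"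
proof -
  let ?P = "\<lambda>p. fst (snd p) \<in> carrier_vec (2*n) \<and> Ec n X t c v d = Ec n X t (fst p) (fst (snd p)) (snd (snd p))"
  have "?P (c, v, d)" using v by simp
  then have P: "?P (crd n X t (Ec n X t c v d))" unfolding crd_def by (rule someI)
  obtain c' v' d' where eq: "crd n X t (Ec n X t c v d) = (c', v', d')" by (cases "crd n X t (Ec n X t c v d)") auto
  from P eq have "v' \<in> carrier_vec (2*n)" "Ec n X t c v d = Ec n X t c' v' d'" by auto
  from E_inj[OF v this(1) this(2)] eq show ?thesis by simp
qed

lemma E_one: "Ec n X t 1 (0\<^sub>v (2*n)) 0 = 1\<^sub>m (2*n+2)"
  by (rule eq_matI) (auto simp: E_index)

lemma E_cube_zero: assumes v: "v \<in> carrier_vec (2*n)"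
  and z: "Ec n X t c v d * Ec n X t c v d * Ec n X t c v d = 0\<^sub>m (2*n+2) (2*n+2)"
  shows "c = 0"
proof -
  have e1: "Ec n X t c v d * Ec n X t c v d = Ec n X t (c*c) (c \<cdot>\<^sub>v v + c \<cdot>\<^sub>v v) (c*d + c*d + v \<bullet> (M *\<^sub>v v))"
    by (rule E_mult[OF v v])
  have w: "c \<cdot>\<^sub>v v + c \<cdot>\<^sub>v v \<in> carrier_vec (2*n)" using v by simp
  have "Ec n X t c v d * Ec n X t c v d * Ec n X t c v d \<in> {Ec n X t (c*c*c) w' e' | w' e'. w' \<in> carrier_vec (2*n)}"
    unfolding e1 E_mult[OF w v] using w v by auto
  then obtain w' e' where w': "w' \<in> carrier_vec (2*n)" and e2: "Ec n X t c v d * Ec n X t c v d * Ec n X t c v d = Ec n X t (c*c*c) w' e'"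
    by blast
  from z e2 have "Ec n X t (c*c*c) w' e' = 0\<^sub>m (2*n+2) (2*n+2)" by simp
  from E_zero[OF w' this] have "c*c*c = 0" by blast
  then show ?thesis by simp
qed

end

lemma mat_vec_zero: "A \<in> carrier_mat nr nc \<Longrightarrow> A *\<^sub>v 0\<^sub>v nc = (0\<^sub>v nr :: 'a::comm_ring_1 vec)"
  by (rule eq_vecI) auto

lemma iso_from_C:
  assumes H1: "halg n A1 m1 X1 t1 M1" and H2: "halg n A2 m2 X2 t2 M2"
    and C: "C \<in> carrier_mat (2*n) (2*n)" and Ci: "invertible_mat C" and MC: "M1 = C * M2 * transpose_mat C"
  shows "alg_iso (2*n+2) A1 A2"
proof -
  interpret a1: halg n A1 m1 X1 t1 M1 by (rule H1)
  interpret a2: halg n A2 m2 X2 t2 M2 by (rule H2)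
  let ?CT = "transpose_mat C"
  have CT: "?CT \<in> carrier_mat (2*n) (2*n)" using C by simp
  obtain D where CD: "C * D = 1\<^sub>m (2*n)" and DC: "D * C = 1\<^sub>m (dim_row D)"
    using Ci C unfolding invertible_mat_def inverts_mat_def by auto
  have D: "D \<in> carrier_mat (2*n) (2*n)"
  proof -
    have "dim_col D = 2*n" using CD C by (metis carrier_matD(2) index_mult_mat(3) index_one_mat(3))
    moreover have "dim_row D = 2*n" using DC C by (metis carrier_matD(2) index_mult_mat(3) index_one_mat(3))
    ultimately show ?thesis by auto
  qed
  have DC': "D * C = 1\<^sub>m (2*n)" using DC D by auto
  let ?DT = "transpose_mat D"
  have DT: "?DT \<in> carrier_mat (2*n) (2*n)" using D by simp
  have CTDT: "?CT * ?DT = 1\<^sub>m (2*n)"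
    using transpose_mult[OF D C] DC' by simp
  have DTCT: "?DT * ?CT = 1\<^sub>m (2*n)"
    using transpose_mult[OF C D] CD by simp
  define \<phi> where "\<phi> z = (case crd n X1 t1 z of (c, v, d) \<Rightarrow> Ec n X2 t2 c (?CT *\<^sub>v v) d)" for z
  have \<phi>E: "\<phi> (Ec n X1 t1 c v d) = Ec n X2 t2 c (?CT *\<^sub>v v) d" if v: "v \<in> carrier_vec (2*n)" for c v d
    unfolding \<phi>_def a1.crd_E[OF v] by simp
  have CTv: "?CT *\<^sub>v v \<in> carrier_vec (2*n)" for v unfolding carrier_vec_def using CT by simp
  have inj: "inj_on \<phi> A1"
  proof (rule inj_onI)
    fix z z' assume z: "z \<in> A1" and z': "z' \<in> A1" and eq: "\<phi> z = \<phi> z'"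
    obtain c v d where v: "v \<in> carrier_vec (2*n)" and zE: "z = Ec n X1 t1 c v d" using a1.A_E[OF z] by blast
    obtain c' v' d' where v': "v' \<in> carrier_vec (2*n)" and zE': "z' = Ec n X1 t1 c' v' d'" using a1.A_E[OF z'] by blast
    from eq have "Ec n X2 t2 c (?CT *\<^sub>v v) d = Ec n X2 t2 c' (?CT *\<^sub>v v') d'"
      unfolding zE zE' \<phi>E[OF v] \<phi>E[OF v'] .
    from a2.E_inj[OF CTv CTv this] have e: "c = c'" "?CT *\<^sub>v v = ?CT *\<^sub>v v'" "d = d'" by auto
    have "v = ?DT *\<^sub>v (?CT *\<^sub>v v)" using DTCT DT CT v by (simp add: assoc_mult_mat_vec[symmetric])
    also have "\<dots> = ?DT *\<^sub>v (?CT *\<^sub>v v')" using e by simp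
    also have "\<dots> = v'" using DTCT DT CT v' by (simp add: assoc_mult_mat_vec[symmetric])
    finally show "z = z'" using zE zE' e by simp
  qed
  have img: "\<phi> ` A1 = A2"
  proof
    show "\<phi> ` A1 \<subseteq> A2"
    proof
      fix y assume "y \<in> \<phi> ` A1"
      then obtain z where z: "z \<in> A1" and y: "y = \<phi> z" by blast
      obtain c v d where v: "v \<in> carrier_vec (2*n)" and zE: "z = Ec n X1 t1 c v d" using a1.A_E[OF z] by blast
      show "y \<in> A2" unfolding y zE \<phi>E[OF v] by (rule a2.E_in_A)
    qed
  next
    show "A2 \<subseteq> \<phi> ` A1"
    proof
      fix y assume y: "y \<in> A2"
      obtain c w d where w: "w \<in> carrier_vec (2*n)" and yE: "y = Ec n X2 t2 c w d" using a2.A_E[OF y] by blast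
      have DTw: "?DT *\<^sub>v w \<in> carrier_vec (2*n)" unfolding carrier_vec_def using DT by simp
      have "?CT *\<^sub>v (?DT *\<^sub>v w) = w" using CTDT DT CT w by (simp add: assoc_mult_mat_vec[symmetric])
      then have "y = \<phi> (Ec n X1 t1 c (?DT *\<^sub>v w) d)" unfolding yE \<phi>E[OF DTw] by simp
      then show "y \<in> \<phi> ` A1" using a1.E_in_A by blast
    qed
  qed
  have one: "\<phi> (1\<^sub>m (2*n+2)) = 1\<^sub>m (2*n+2)"
  proof -
    have "\<phi> (1\<^sub>m (2*n+2)) = \<phi> (Ec n X1 t1 1 (0\<^sub>v (2*n)) 0)" using a1.E_one by simp
    also have "\<dots> = Ec n X2 t2 1 (0\<^sub>v (2*n)) 0" unfolding \<phi>E[OF zero_carrier_vec] mat_vec_zero[OF CT] ..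
    also have "\<dots> = 1\<^sub>m (2*n+2)" by (rule a2.E_one)
    finally show ?thesis .
  qed
  have hom: "\<phi> (x + y) = \<phi> x + \<phi> y \<and> \<phi> (x * y) = \<phi> x * \<phi> y" if x: "x \<in> A1" and y: "y \<in> A1" for x y
  proof -
    obtain c v d where v: "v \<in> carrier_vec (2*n)" and xE: "x = Ec n X1 t1 c v d" using a1.A_E[OF x] by blast
    obtain c' v' d' where v': "v' \<in> carrier_vec (2*n)" and yE: "y = Ec n X1 t1 c' v' d'" using a1.A_E[OF y] by blast
    have add: "\<phi> (x + y) = \<phi> x + \<phi> y"
      unfolding xE yE a1.E_add[OF v v'] \<phi>E[OF v] \<phi>E[OF v'] \<phi>E[OF add_carrier_vec[OF v v']]
        a2.E_add[OF CTv CTv] using CT v v' by (simp add: mult_add_distrib_mat_vec)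
    have sc: "v \<bullet> (M1 *\<^sub>v v') = (?CT *\<^sub>v v) \<bullet> (M2 *\<^sub>v (?CT *\<^sub>v v'))"
    proof -
      have M2: "M2 \<in> carrier_mat (2*n) (2*n)" by (rule a2.Mc)
      have "M1 *\<^sub>v v' = C *\<^sub>v (M2 *\<^sub>v (?CT *\<^sub>v v'))"
      proof -
        have CM2: "C * M2 \<in> carrier_mat (2*n) (2*n)" using C M2 by simp
        have "C * M2 * ?CT *\<^sub>v v' = (C * M2) *\<^sub>v (?CT *\<^sub>v v')"
          by (rule assoc_mult_mat_vec[OF CM2 CT v'])
        also have "\<dots> = C *\<^sub>v (M2 *\<^sub>v (?CT *\<^sub>v v'))"
          by (rule assoc_mult_mat_vec[OF C M2 CTv])
        finally show ?thesis unfolding MC .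
      qed
      then have "v \<bullet> (M1 *\<^sub>v v') = v \<bullet> (C *\<^sub>v (M2 *\<^sub>v (?CT *\<^sub>v v')))" by simp
      also have "\<dots> = (?CT *\<^sub>v v) \<bullet> (M2 *\<^sub>v (?CT *\<^sub>v v'))"
        by (rule transpose_vec_mult_scalar[OF C _ v, symmetric]) (use M2 CT v' in auto)
      finally show ?thesis .
    qed
    have lin: "?CT *\<^sub>v (c \<cdot>\<^sub>v v' + c' \<cdot>\<^sub>v v) = c \<cdot>\<^sub>v (?CT *\<^sub>v v') + c' \<cdot>\<^sub>v (?CT *\<^sub>v v)"
      using CT v v' by (simp add: mult_add_distrib_mat_vec[of _ "2*n" "2*n"] mult_mat_vec[of _ "2*n" "2*n"])
    have mul: "\<phi> (x * y) = \<phi> x * \<phi> y"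
      unfolding xE yE a1.E_mult[OF v v'] \<phi>E[OF v] \<phi>E[OF v'] a2.E_mult[OF CTv CTv]
      using v v' by (subst \<phi>E) (auto simp: lin sc)
    show ?thesis using add mul by simp
  qed
  have sm: "\<phi> (a \<cdot>\<^sub>m x) = a \<cdot>\<^sub>m \<phi> x" if x: "x \<in> A1" for a x
  proof -
    obtain c v d where v: "v \<in> carrier_vec (2*n)" and xE: "x = Ec n X1 t1 c v d" using a1.A_E[OF x] by blast
    show ?thesis unfolding xE a1.E_smult[OF v] \<phi>E[OF v] a2.E_smult[OF CTv] \<phi>E[OF smult_carrier_vec[THEN iffD2, OF v]]
      using CT v by (simp add: mult_mat_vec[of _ "2*n" "2*n"])
  qed
  show ?thesis unfolding alg_iso_def
    using inj img one hom sm unfolding bij_betw_def by blast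
qed



lemma det_inv: fixes A :: "complex mat" assumes A: "A \<in> carrier_mat k k" and d: "det A \<noteq> 0"
  shows "invertible_mat A"
proof -
  from det_non_zero_imp_unit[OF A d, of "()"]
  obtain B where B: "B \<in> carrier_mat k k" "B * A = 1\<^sub>m k" "A * B = 1\<^sub>m k"
    unfolding Units_def ring_mat_def by auto
  then show ?thesis using A unfolding invertible_mat_def inverts_mat_def square_mat.simps by auto
qed

context halg begin

lemma A_mult: "x \<in> A \<Longrightarrow> y \<in> A \<Longrightarrow> x * y \<in> A"
  using A_E E_mult E_in_A by metis
lemma A_add: "x \<in> A \<Longrightarrow> y \<in> A \<Longrightarrow> x + y \<in> A"
  using A_E E_add E_in_A by metis
lemma A_smult: "x \<in> A \<Longrightarrow> a \<cdot>\<^sub>m x \<in> A"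
  using A_E E_smult E_in_A by metis
lemma one_in_A: "1\<^sub>m (2*n+2) \<in> A"
  using E_one E_in_A by metis
lemma E00: "Ec n X t 0 (0\<^sub>v (2*n)) s = s \<cdot>\<^sub>m t"
  by (rule eq_matI) (auto simp: E_index)
lemma zero_in_A: "0\<^sub>m (2*n+2) (2*n+2) \<in> A"
proof -
  have "0\<^sub>m (2*n+2) (2*n+2) = Ec n X t 0 (0\<^sub>v (2*n)) 0" unfolding E00 by (simp add: smult0_mat[OF tc])
  then show ?thesis using E_in_A by simp
qed
lemma prod_m: assumes w: "w \<in> carrier_vec (2*n)" and w': "w' \<in> carrier_vec (2*n)"
  shows "Ec n X t 0 w e * Ec n X t 0 w' e' = (w \<bullet> (M *\<^sub>v w')) \<cdot>\<^sub>m t"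
proof -
  have z: "0 \<cdot>\<^sub>v w' + 0 \<cdot>\<^sub>v w = 0\<^sub>v (2*n)" using w w' by (intro eq_vecI) auto
  show ?thesis unfolding E_mult[OF w w'] z E00[symmetric] by simp
qed
lemma t_inj: "a \<cdot>\<^sub>m t = b \<cdot>\<^sub>m t \<Longrightarrow> a = b"
  using E_inj[of "0\<^sub>v (2*n)" "0\<^sub>v (2*n)" 0 a 0 b] unfolding E00 by simp
lemma t_E: "t = Ec n X t 0 (0\<^sub>v (2*n)) 1"
  unfolding E00 by simp
lemma X_A: "i < 2*n \<Longrightarrow> X i \<in> A" using X_in_m m_sub_A by auto
lemma t_A: "t \<in> A" using t_in_m m_sub_A by auto

end

lemma C_from_iso:
  assumes H1: "halg n A1 m1 X1 t1 M1" and H2: "halg n A2 m2 X2 t2 M2"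
    and iso: "alg_iso (2*n+2) A1 A2"
  shows "\<exists>C \<in> carrier_mat (2*n) (2*n). invertible_mat C \<and> M1 = C * M2 * transpose_mat C"
proof -
  interpret a1: halg n A1 m1 X1 t1 M1 by (rule H1)
  interpret a2: halg n A2 m2 X2 t2 M2 by (rule H2)
  obtain \<phi> where bij: "bij_betw \<phi> A1 A2" and one: "\<phi> (1\<^sub>m (2*n+2)) = 1\<^sub>m (2*n+2)"
    and hom: "\<And>x y. x \<in> A1 \<Longrightarrow> y \<in> A1 \<Longrightarrow> \<phi> (x + y) = \<phi> x + \<phi> y \<and> \<phi> (x * y) = \<phi> x * \<phi> y"
    and sm: "\<And>c x. x \<in> A1 \<Longrightarrow> \<phi> (c \<cdot>\<^sub>m x) = c \<cdot>\<^sub>m \<phi> x"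
    using iso unfolding alg_iso_def by blast
  have inj: "inj_on \<phi> A1" and img: "\<phi> ` A1 = A2" using bij unfolding bij_betw_def by auto
  have inA2: "x \<in> A1 \<Longrightarrow> \<phi> x \<in> A2" for x using img by auto
  have phi0: "\<phi> (0\<^sub>m (2*n+2) (2*n+2)) = 0\<^sub>m (2*n+2) (2*n+2)"
  proof -
    have "0\<^sub>m (2*n+2) (2*n+2) = (0::complex) \<cdot>\<^sub>m 1\<^sub>m (2*n+2)" by (rule smult0_mat[symmetric]) simp
    then have "\<phi> (0\<^sub>m (2*n+2) (2*n+2)) = 0 \<cdot>\<^sub>m \<phi> (1\<^sub>m (2*n+2))" using sm a1.one_in_A by metis
    then show ?thesis unfolding one by (simp add: smult0_mat)
  qed
  have mm: "\<exists>w e. w \<in> carrier_vec (2*n) \<and> \<phi> z = Ec n X2 t2 0 w e" if z: "z \<in> m1" for z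
  proof -
    have zA: "z \<in> A1" using z a1.m_sub_A by auto
    have "z * z * z = 0\<^sub>m (2*n+2) (2*n+2)" using a1.m3 z by blast
    then have "\<phi> (z * z * z) = 0\<^sub>m (2*n+2) (2*n+2)" using phi0 by simp
    moreover have "\<phi> (z * z * z) = \<phi> z * \<phi> z * \<phi> z" using hom zA a1.A_mult by metis
    ultimately have cube: "\<phi> z * \<phi> z * \<phi> z = 0\<^sub>m (2*n+2) (2*n+2)" by simp
    obtain c w e where w: "w \<in> carrier_vec (2*n)" and pz: "\<phi> z = Ec n X2 t2 c w e"
      using a2.A_E[OF inA2[OF zA]] by blast
    have "c = 0" using a2.E_cube_zero[OF w] cube unfolding pz by blast
    then show ?thesis using w pz by blast
  qed
  have "\<forall>i. \<exists>p. i < 2*n \<longrightarrow> fst p \<in> carrier_vec (2*n) \<and> \<phi> (X1 i) = Ec n X2 t2 0 (fst p) (snd p)"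
    using mm a1.X_in_m by fastforce
  then obtain P where P: "\<And>i. i < 2*n \<Longrightarrow> fst (P i) \<in> carrier_vec (2*n) \<and> \<phi> (X1 i) = Ec n X2 t2 0 (fst (P i)) (snd (P i))"
    by metis
  define W where "W i = fst (P i)" for i
  define ee where "ee i = snd (P i)" for i
  have W: "W i \<in> carrier_vec (2*n)" if "i < 2*n" for i using P that W_def by auto
  have PX: "\<phi> (X1 i) = Ec n X2 t2 0 (W i) (ee i)" if "i < 2*n" for i using P that W_def ee_def by auto
  have n0: "0 < 2*n" "n < 2*n" using a1.n1 by auto
  define lam where "lam = W 0 \<bullet> (M2 *\<^sub>v W n) - W n \<bullet> (M2 *\<^sub>v W 0)"
  have phit: "\<phi> t1 = lam \<cdot>\<^sub>m t2"
  proof -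
    have X0: "X1 0 \<in> A1" "X1 n \<in> A1" using a1.X_A n0 by auto
    have c0: "X1 0 \<in> carrier_mat (2*n+2) (2*n+2)" "X1 n \<in> carrier_mat (2*n+2) (2*n+2)" using a1.Xc n0 by auto
    have eq: "X1 0 * X1 n = t1 + X1 n * X1 0"
      unfolding a1.t_eq using c0 by (intro eq_matI) auto
    have "\<phi> (X1 0 * X1 n) = \<phi> t1 + \<phi> (X1 n * X1 0)"
      unfolding eq using hom a1.t_A a1.A_mult X0 by blast
    moreover have "\<phi> (X1 0 * X1 n) = (W 0 \<bullet> (M2 *\<^sub>v W n)) \<cdot>\<^sub>m t2"
      using hom X0 PX n0 a2.prod_m W by simp
    moreover have "\<phi> (X1 n * X1 0) = (W n \<bullet> (M2 *\<^sub>v W 0)) \<cdot>\<^sub>m t2"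
      using hom X0 PX n0 a2.prod_m W by simp
    moreover have "\<phi> t1 \<in> carrier_mat (2*n+2) (2*n+2)" using a2.A_carrier inA2 a1.t_A by blast
    ultimately have E: "(W 0 \<bullet> (M2 *\<^sub>v W n)) \<cdot>\<^sub>m t2 = \<phi> t1 + (W n \<bullet> (M2 *\<^sub>v W 0)) \<cdot>\<^sub>m t2"
      and c: "\<phi> t1 \<in> carrier_mat (2*n+2) (2*n+2)" by auto
    show ?thesis
    proof (rule eq_matI)
      fix i j assume ij: "i < dim_row (lam \<cdot>\<^sub>m t2)" "j < dim_col (lam \<cdot>\<^sub>m t2)"
      then have ij': "i < 2*n+2" "j < 2*n+2" by auto
      have "((W 0 \<bullet> (M2 *\<^sub>v W n)) \<cdot>\<^sub>m t2) $$ (i,j) = (\<phi> t1 + (W n \<bullet> (M2 *\<^sub>v W 0)) \<cdot>\<^sub>m t2) $$ (i,j)"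
        using E by simp
      then have "(W 0 \<bullet> (M2 *\<^sub>v W n)) * t2 $$ (i,j) = \<phi> t1 $$ (i,j) + (W n \<bullet> (M2 *\<^sub>v W 0)) * t2 $$ (i,j)"
        using ij' by simp
      then show "\<phi> t1 $$ (i,j) = (lam \<cdot>\<^sub>m t2) $$ (i,j)"
        using ij' unfolding lam_def by (simp add: algebra_simps)
    qed (use c in auto)
  qed
  have lam0: "lam \<noteq> 0"
  proof
    assume "lam = 0"
    then have "\<phi> t1 = \<phi> (0\<^sub>m (2*n+2) (2*n+2))" using phit phi0 by (simp add: smult0_mat[OF a2.tc])
    then have "t1 = 0\<^sub>m (2*n+2) (2*n+2)" using inj a1.t_A a1.zero_in_A inj_onD by metis
    then have "Ec n X1 t1 0 (0\<^sub>v (2*n)) 1 = 0\<^sub>m (2*n+2) (2*n+2)" using a1.t_E by simp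
    from a1.E_zero[OF _ this] show False by simp
  qed
  have key: "M1 $$ (i,j) * lam = W i \<bullet> (M2 *\<^sub>v W j)" if i: "i < 2*n" and j: "j < 2*n" for i j
  proof -
    have "\<phi> (X1 i * X1 j) = \<phi> (X1 i) * \<phi> (X1 j)" using hom a1.X_A i j by blast
    also have "\<dots> = (W i \<bullet> (M2 *\<^sub>v W j)) \<cdot>\<^sub>m t2" unfolding PX[OF i] PX[OF j] by (rule a2.prod_m[OF W[OF i] W[OF j]])
    finally have 1: "\<phi> (X1 i * X1 j) = (W i \<bullet> (M2 *\<^sub>v W j)) \<cdot>\<^sub>m t2" .
    have "\<phi> (X1 i * X1 j) = \<phi> (M1 $$ (i,j) \<cdot>\<^sub>m t1)" using a1.XX i j by simp
    also have "\<dots> = (M1 $$ (i,j) * lam) \<cdot>\<^sub>m t2" using sm a1.t_A phit smult_smult_mat by simp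
    finally show ?thesis using 1 a2.t_inj by simp
  qed
  define D where "D = mat (2*n) (2*n) (\<lambda>(i,k). W i $ k)"
  have Dc: "D \<in> carrier_mat (2*n) (2*n)" unfolding D_def by simp
  have M2c: "M2 \<in> carrier_mat (2*n) (2*n)" by (rule a2.Mc)
  have rowD: "row D i = W i" if i: "i < 2*n" for i
    using W[OF i] i unfolding D_def by (intro eq_vecI) auto
  have DMD: "D * M2 * transpose_mat D = lam \<cdot>\<^sub>m M1"
  proof (rule eq_matI)
    fix i j assume "i < dim_row (lam \<cdot>\<^sub>m M1)" "j < dim_col (lam \<cdot>\<^sub>m M1)"
    then have i: "i < 2*n" and j: "j < 2*n" using a1.Mc by auto
    have r: "row (D * M2) i = transpose_mat M2 *\<^sub>v W i"
    proof (rule eq_vecI)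
      fix k assume "k < dim_vec (transpose_mat M2 *\<^sub>v W i)"
      then have k: "k < 2*n" using M2c by auto
      show "row (D * M2) i $ k = (transpose_mat M2 *\<^sub>v W i) $ k"
        using k i M2c Dc W[OF i] rowD[OF i] by (simp add: comm_scalar_prod[of _ "2*n"])
    qed (use M2c Dc i in auto)
    have "(D * M2 * transpose_mat D) $$ (i,j) = row (D * M2) i \<bullet> col (transpose_mat D) j"
      by (rule index_mult_mat(1)) (use Dc M2c i j in auto)
    also have "\<dots> = (transpose_mat M2 *\<^sub>v W i) \<bullet> W j"
      unfolding r using Dc j rowD[OF j] by simp
    also have "\<dots> = W i \<bullet> (M2 *\<^sub>v W j)"
      by (rule transpose_vec_mult_scalar[OF M2c W[OF j] W[OF i]])
    also have "\<dots> = (lam \<cdot>\<^sub>m M1) $$ (i,j)" using key[OF i j] a1.Mc i j by (simp add: mult.commute)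
    finally show "(D * M2 * transpose_mat D) $$ (i,j) = (lam \<cdot>\<^sub>m M1) $$ (i,j)" .
  qed (use Dc a1.Mc M2c in auto)
  have DTv: "(transpose_mat D *\<^sub>v v) $ l = (\<Sum>i<2*n. W i $ l * v $ i)" if l: "l < 2*n" and v: "v \<in> carrier_vec (2*n)" for l v
  proof -
    have "(transpose_mat D *\<^sub>v v) $ l = col D l \<bullet> v" using Dc l by simp
    also have "\<dots> = (\<Sum>i<2*n. W i $ l * v $ i)"
      unfolding scalar_prod_def using Dc l v unfolding D_def by (auto simp: lessThan_atLeast0 intro!: sum.cong)
    finally show ?thesis .
  qed
  have philin: "\<phi> (Ec n X1 t1 0 v 0) = Ec n X2 t2 0 (transpose_mat D *\<^sub>v v) (\<Sum>i<2*n. v $ i * ee i)"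
    if v: "v \<in> carrier_vec (2*n)" for v
  proof -
    have fA: "v $ i \<cdot>\<^sub>m X1 i \<in> A1" if "i < 2*n" for i using a1.A_smult a1.X_A that by blast
    have step: "k \<le> 2*n \<Longrightarrow> \<phi> (msum (2*n+2) (\<lambda>i. v $ i \<cdot>\<^sub>m X1 i) k) = msum (2*n+2) (\<lambda>i. v $ i \<cdot>\<^sub>m \<phi> (X1 i)) k" for k
    proof (induction k)
      case 0 then show ?case using phi0 by simp
    next
      case (Suc k)
      have mA: "msum (2*n+2) (\<lambda>i. v $ i \<cdot>\<^sub>m X1 i) k \<in> A1"
        by (rule msum_closed) (use a1.zero_in_A a1.A_add fA Suc in auto)
      have "\<phi> (msum (2*n+2) (\<lambda>i. v $ i \<cdot>\<^sub>m X1 i) (Suc k)) = \<phi> (msum (2*n+2) (\<lambda>i. v $ i \<cdot>\<^sub>m X1 i) k) + \<phi> (v $ k \<cdot>\<^sub>m X1 k)"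
        using hom mA fA Suc by simp
      then show ?case using Suc sm a1.X_A by simp
    qed
    have "\<phi> (Ec n X1 t1 0 v 0) = msum (2*n+2) (\<lambda>i. v $ i \<cdot>\<^sub>m \<phi> (X1 i)) (2*n)"
      unfolding a1.lin0t linc_def using step by simp
    also have "\<dots> = msum (2*n+2) (\<lambda>i. v $ i \<cdot>\<^sub>m Ec n X2 t2 0 (W i) (ee i)) (2*n)"
      by (rule msum_cong) (simp add: PX)
    also have "\<dots> = Ec n X2 t2 0 (transpose_mat D *\<^sub>v v) (\<Sum>i<2*n. v $ i * ee i)"
    proof (rule eq_matI)
      fix a b assume "a < dim_row (Ec n X2 t2 0 (transpose_mat D *\<^sub>v v) (\<Sum>i<2*n. v $ i * ee i))"
        "b < dim_col (Ec n X2 t2 0 (transpose_mat D *\<^sub>v v) (\<Sum>i<2*n. v $ i * ee i))"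
      then have ab: "a < 2*n+2" "b < 2*n+2" by auto
      have "msum (2*n+2) (\<lambda>i. v $ i \<cdot>\<^sub>m Ec n X2 t2 0 (W i) (ee i)) (2*n) $$ (a,b)
          = (\<Sum>i<2*n. v $ i * ((\<Sum>l<2*n. W i $ l * X2 l $$ (a,b)) + ee i * t2 $$ (a,b)))"
        using ab by (subst msum_index[where N="2*n+2"]) (auto simp: a2.E_carrier a2.E_index)
      also have "\<dots> = (\<Sum>l<2*n. (\<Sum>i<2*n. W i $ l * v $ i) * X2 l $$ (a,b)) + (\<Sum>i<2*n. v $ i * ee i) * t2 $$ (a,b)"
        apply (simp add: distrib_left sum.distrib sum_distrib_left sum_distrib_right)
        apply (subst sum.swap)
        apply (simp add: algebra_simps)
        done
      also have "\<dots> = Ec n X2 t2 0 (transpose_mat D *\<^sub>v v) (\<Sum>i<2*n. v $ i * ee i) $$ (a,b)"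
        using ab v by (simp add: a2.E_index DTv)
      finally show "msum (2*n+2) (\<lambda>i. v $ i \<cdot>\<^sub>m Ec n X2 t2 0 (W i) (ee i)) (2*n) $$ (a,b)
          = Ec n X2 t2 0 (transpose_mat D *\<^sub>v v) (\<Sum>i<2*n. v $ i * ee i) $$ (a,b)" .
    qed (auto intro!: msum_carrier[THEN carrier_matD(1)] msum_carrier[THEN carrier_matD(2)] simp: a2.E_carrier)
    finally show ?thesis .
  qed
  have detD: "det D \<noteq> 0"
  proof
    assume "det D = 0"
    then have "det (transpose_mat D) = 0" using det_transpose[OF Dc] by simp
    then obtain v where v: "v \<in> carrier_vec (2*n)" "v \<noteq> 0\<^sub>v (2*n)" and Dv: "transpose_mat D *\<^sub>v v = 0\<^sub>v (2*n)"
      using det_0_iff_vec_prod_zero[of "transpose_mat D" "2*n"] Dc by auto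
    define s where "s = (\<Sum>i<2*n. v $ i * ee i)"
    have "\<phi> (Ec n X1 t1 0 v 0) = s \<cdot>\<^sub>m t2" unfolding philin[OF v(1)] Dv s_def a2.E00 ..
    also have "\<dots> = \<phi> ((s / lam) \<cdot>\<^sub>m t1)"
      unfolding sm[OF a1.t_A] phit smult_smult_mat using lam0 by simp
    finally have "Ec n X1 t1 0 v 0 = (s / lam) \<cdot>\<^sub>m t1"
      using inj a1.E_in_A a1.A_smult a1.t_A inj_onD by metis
    then have "Ec n X1 t1 0 v 0 = Ec n X1 t1 0 (0\<^sub>v (2*n)) (s / lam)" unfolding a1.E00 .
    from a1.E_inj[OF v(1) _ this] v(2) show False by simp
  qed
  define \<sigma> where "\<sigma> = csqrt lam"
  have \<sigma>2: "\<sigma> * \<sigma> = lam" unfolding \<sigma>_def using power2_csqrt[of lam] by (simp add: power2_eq_square)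
  have \<sigma>0: "\<sigma> \<noteq> 0" using \<sigma>2 lam0 by auto
  define C where "C = (1 / \<sigma>) \<cdot>\<^sub>m D"
  have Cc: "C \<in> carrier_mat (2*n) (2*n)" unfolding C_def using Dc by simp
  have "det C \<noteq> 0" unfolding C_def using detD \<sigma>0 by simp
  then have Cinv: "invertible_mat C" by (rule det_inv[OF Cc])
  have CT: "transpose_mat C = (1 / \<sigma>) \<cdot>\<^sub>m transpose_mat D"
    unfolding C_def by (rule eq_matI) auto
  have DT: "transpose_mat D \<in> carrier_mat (2*n) (2*n)" using Dc by simp
  have DM: "D * M2 \<in> carrier_mat (2*n) (2*n)" using Dc M2c by simp
  have "C * M2 * transpose_mat C = (1 / \<sigma>) \<cdot>\<^sub>m ((D * M2) * ((1 / \<sigma>) \<cdot>\<^sub>m transpose_mat D))"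
    unfolding CT unfolding C_def
    by (simp add: mult_smult_assoc_mat[OF Dc M2c] mult_smult_assoc_mat[OF DM smult_carrier_mat[OF DT]])
  also have "\<dots> = ((1 / \<sigma>) * (1 / \<sigma>) * lam) \<cdot>\<^sub>m M1"
    unfolding mult_smult_distrib[OF DM DT] DMD smult_smult_mat by (simp add: mult.assoc)
  also have "(1 / \<sigma>) * (1 / \<sigma>) * lam = 1" using \<sigma>2 \<sigma>0 lam0 by (simp add: field_simps)
  finally have "M1 = C * M2 * transpose_mat C" by simp
  then show ?thesis using Cc Cinv by blast
qed



definition inS :: "nat \<Rightarrow> complex mat \<Rightarrow> bool" where
  "inS k P \<longleftrightarrow> P \<in> carrier_mat (Suc k) (Suc k) \<and> (\<forall>i<k. P $$ (i,k) = 0) \<and>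
     (\<forall>i<k. \<forall>j<k. i \<noteq> j \<and> j \<noteq> 0 \<longrightarrow> P $$ (i,j) = 0) \<and> (\<exists>a. \<forall>i<k. P $$ (i,i) = a)"

definition inS0 :: "nat \<Rightarrow> complex mat \<Rightarrow> bool" where
  "inS0 k P \<longleftrightarrow> P \<in> carrier_mat (Suc k) (Suc k) \<and> (\<forall>i<Suc k. \<forall>j<Suc k. P $$ (i,j) \<noteq> 0 \<longrightarrow>
      (j = 0 \<and> 1 \<le> i \<and> i < k) \<or> (i = k \<and> j < k))"

lemma mult_entry: "P \<in> carrier_mat N N \<Longrightarrow> Q \<in> carrier_mat N N \<Longrightarrow> i < N \<Longrightarrow> j < N \<Longrightarrow>
  (P * Q) $$ (i,j) = (\<Sum>l<N. P $$ (i,l) * Q $$ (l,j))"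
  by (simp add: scalar_prod_def lessThan_atLeast0 row_def col_def)

lemma sum_single: "j0 < (N::nat) \<Longrightarrow> (\<And>l. l < N \<Longrightarrow> l \<noteq> j0 \<Longrightarrow> f l = 0) \<Longrightarrow> (\<Sum>l<N. f l) = (f j0 :: complex)"
proof -
  assume j0: "j0 < N" and z: "\<And>l. l < N \<Longrightarrow> l \<noteq> j0 \<Longrightarrow> f l = 0"
  have "(\<Sum>l<N. f l) = f j0 + (\<Sum>l\<in>{..<N}-{j0}. f l)" by (rule sum.remove) (use j0 in auto)
  moreover have "(\<Sum>l\<in>{..<N}-{j0}. f l) = 0" by (rule sum.neutral) (use z in auto)
  ultimately show ?thesis by simp
qed

lemma inS_one: "inS k (1\<^sub>m (Suc k))"
  unfolding inS_def by auto

lemma inS_add: assumes P: "inS k P" and Q: "inS k Q" shows "inS k (P + Q)"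
proof -
  obtain a where a: "\<And>i. i < k \<Longrightarrow> P $$ (i,i) = a" using P unfolding inS_def by auto
  obtain b where b: "\<And>i. i < k \<Longrightarrow> Q $$ (i,i) = b" using Q unfolding inS_def by auto
  have "\<forall>i<k. (P + Q) $$ (i,i) = a + b" using a b Q unfolding inS_def by auto
  then show ?thesis using P Q unfolding inS_def by auto
qed

lemma inS_smult: assumes P: "inS k P" shows "inS k (c \<cdot>\<^sub>m P)"
proof -
  obtain a where a: "\<And>i. i < k \<Longrightarrow> P $$ (i,i) = a" using P unfolding inS_def by auto
  have "\<forall>i<k. (c \<cdot>\<^sub>m P) $$ (i,i) = c * a" using a P unfolding inS_def by auto
  then show ?thesis using P unfolding inS_def by auto
qed

lemma inS_mult_diag: assumes P: "inS k P" and Q: "inS k Q" and i: "i < k" and k: "0 < k"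
  shows "(P * Q) $$ (i,i) = P $$ (0,0) * Q $$ (0,0)"
proof -
  have Pc: "P \<in> carrier_mat (Suc k) (Suc k)" and Qc: "Q \<in> carrier_mat (Suc k) (Suc k)" using P Q unfolding inS_def by auto
  obtain a where a: "\<And>i. i < k \<Longrightarrow> P $$ (i,i) = a" using P unfolding inS_def by auto
  obtain b where b: "\<And>i. i < k \<Longrightarrow> Q $$ (i,i) = b" using Q unfolding inS_def by auto
  have "(P * Q) $$ (i,i) = (\<Sum>l<Suc k. P $$ (i,l) * Q $$ (l,i))" using mult_entry[OF Pc Qc] i by simp
  also have "\<dots> = P $$ (i,i) * Q $$ (i,i)"
  proof (rule sum_single)
    fix l assume l: "l < Suc k" "l \<noteq> i"
    show "P $$ (i,l) * Q $$ (l,i) = 0"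
    proof (cases "l = k")
      case True then show ?thesis using P i unfolding inS_def by auto
    next
      case False
      then have lk: "l < k" using l by auto
      show ?thesis
      proof (cases "i = 0")
        case True then show ?thesis using P lk l unfolding inS_def by auto
      next
        case False then show ?thesis using Q lk l i unfolding inS_def by auto
      qed
    qed
  qed (use i in auto)
  also have "\<dots> = P $$ (0,0) * Q $$ (0,0)" using a b i k by simp
  finally show ?thesis .
qed

lemma inS_mult_last: assumes P: "inS k P" and Q: "inS k Q"
  shows "(P * Q) $$ (k,k) = P $$ (k,k) * Q $$ (k,k)"
proof -
  have Pc: "P \<in> carrier_mat (Suc k) (Suc k)" and Qc: "Q \<in> carrier_mat (Suc k) (Suc k)" using P Q unfolding inS_def by auto
  have "(P * Q) $$ (k,k) = (\<Sum>l<Suc k. P $$ (k,l) * Q $$ (l,k))" using mult_entry[OF Pc Qc] by simp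
  also have "\<dots> = P $$ (k,k) * Q $$ (k,k)"
    by (rule sum_single) (use Q in \<open>auto simp: inS_def\<close>)
  finally show ?thesis .
qed

lemma inS_mult: assumes P: "inS k P" and Q: "inS k Q" and k: "0 < k"
  shows "inS k (P * Q)"
proof -
  have Pc: "P \<in> carrier_mat (Suc k) (Suc k)" and Qc: "Q \<in> carrier_mat (Suc k) (Suc k)" using P Q unfolding inS_def by auto
  have c1: "(P * Q) $$ (i,k) = 0" if i: "i < k" for i
  proof -
    have "(P * Q) $$ (i,k) = (\<Sum>l<Suc k. P $$ (i,l) * Q $$ (l,k))" using mult_entry[OF Pc Qc] i by simp
    also have "\<dots> = 0"
    proof (rule sum.neutral, intro ballI)
      fix l assume "l \<in> {..<Suc k}"
      then show "P $$ (i,l) * Q $$ (l,k) = 0"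
        using P Q i unfolding inS_def by (cases "l = k") auto
    qed
    finally show ?thesis .
  qed
  have c2: "(P * Q) $$ (i,j) = 0" if i: "i < k" and j: "j < k" and ij: "i \<noteq> j" "j \<noteq> 0" for i j
  proof -
    have "(P * Q) $$ (i,j) = (\<Sum>l<Suc k. P $$ (i,l) * Q $$ (l,j))" using mult_entry[OF Pc Qc] i j by simp
    also have "\<dots> = 0"
    proof (rule sum.neutral, intro ballI)
      fix l assume l: "l \<in> {..<Suc k}"
      show "P $$ (i,l) * Q $$ (l,j) = 0"
      proof (cases "l = k")
        case True then show ?thesis using P i unfolding inS_def by auto
      next
        case False
        then have lk: "l < k" using l by auto
        show ?thesis
        proof (cases "l = j")
          case True then show ?thesis using P i j ij unfolding inS_def by auto
        next
          case False then show ?thesis using Q lk j ij unfolding inS_def by auto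
        qed
      qed
    qed
    finally show ?thesis .
  qed
  have c3: "(P * Q) $$ (i,i) = P $$ (0,0) * Q $$ (0,0)" if i: "i < k" for i
    using inS_mult_diag[OF P Q i k] by simp
  have "P * Q \<in> carrier_mat (Suc k) (Suc k)" using Pc Qc by simp
  then show ?thesis unfolding inS_def using c1 c2 c3 by blast
qed

lemma inS_inS0: assumes P: "inS k P" and a: "P $$ (0,0) = 0" and r: "P $$ (k,k) = 0" shows "inS0 k P"
proof -
  have c: "P \<in> carrier_mat (Suc k) (Suc k)"
    and h1: "\<And>i. i<k \<Longrightarrow> P $$ (i,k) = 0"
    and h2: "\<And>i j. i<k \<Longrightarrow> j<k \<Longrightarrow> i \<noteq> j \<Longrightarrow> j \<noteq> 0 \<Longrightarrow> P $$ (i,j) = 0"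
    using P unfolding inS_def by auto
  obtain aa where h3: "\<And>i. i<k \<Longrightarrow> P $$ (i,i) = aa" using P unfolding inS_def by auto
  have "(j = 0 \<and> 1 \<le> i \<and> i < k) \<or> (i = k \<and> j < k)"
    if i: "i < Suc k" and j: "j < Suc k" and nz: "P $$ (i,j) \<noteq> 0" for i j
  proof (cases "i = k")
    case True
    then have "j \<noteq> k" using nz r by auto
    then show ?thesis using True j by auto
  next
    case False
    then have ik: "i < k" using i by auto
    then have "j \<noteq> k" using nz h1 by auto
    then have jk: "j < k" using j by auto
    show ?thesis
    proof (cases "j = 0")
      case True
      have "i \<noteq> 0"
      proof
        assume "i = 0" then show False using nz a True by simp
      qed
      then show ?thesis using True ik by auto
    next
      case False
      then have "i = j" using h2[OF ik jk] nz by auto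
      then show ?thesis using h3[OF ik] h3[of 0] ik a nz by auto
    qed
  qed
  then show ?thesis unfolding inS0_def using c by auto
qed

lemma inS0_prod: assumes P: "inS0 k P" and Q: "inS0 k Q" and i: "i < Suc k" and j: "j < Suc k"
    and nz: "(P * Q) $$ (i,j) \<noteq> 0"
  shows "i = k \<and> j = 0"
proof (rule ccontr)
  assume ne: "\<not> (i = k \<and> j = 0)"
  have Pc: "P \<in> carrier_mat (Suc k) (Suc k)" and Qc: "Q \<in> carrier_mat (Suc k) (Suc k)" using P Q unfolding inS0_def by auto
  have "(P * Q) $$ (i,j) = (\<Sum>l<Suc k. P $$ (i,l) * Q $$ (l,j))" using mult_entry[OF Pc Qc] i j by simp
  also have "\<dots> = 0"
  proof (rule sum.neutral, intro ballI)
    fix l assume l: "l \<in> {..<Suc k}"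
    show "P $$ (i,l) * Q $$ (l,j) = 0"
    proof (rule ccontr)
      assume "P $$ (i,l) * Q $$ (l,j) \<noteq> 0"
      then have a: "P $$ (i,l) \<noteq> 0" and b: "Q $$ (l,j) \<noteq> 0" by auto
      from a P i l have A: "(l = 0 \<and> 1 \<le> i \<and> i < k) \<or> (i = k \<and> l < k)" unfolding inS0_def by auto
      from b Q j l have B: "(j = 0 \<and> 1 \<le> l \<and> l < k) \<or> (l = k \<and> j < k)" unfolding inS0_def by auto
      from A B ne show False by auto
    qed
  qed
  finally show False using nz by simp
qed

lemma inS0_triple: assumes P: "inS0 k P" and Q: "inS0 k Q" and R: "inS0 k R" and k: "0 < k"
  shows "P * Q * R = 0\<^sub>m (Suc k) (Suc k)"
proof -
  have Pc: "P \<in> carrier_mat (Suc k) (Suc k)" and Qc: "Q \<in> carrier_mat (Suc k) (Suc k)"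
    and Rc: "R \<in> carrier_mat (Suc k) (Suc k)" using P Q R unfolding inS0_def by auto
  have PQ: "P * Q \<in> carrier_mat (Suc k) (Suc k)" using Pc Qc by simp
  show ?thesis
  proof (rule eq_matI)
    fix i j assume "i < dim_row (0\<^sub>m (Suc k) (Suc k) :: complex mat)" "j < dim_col (0\<^sub>m (Suc k) (Suc k) :: complex mat)"
    then have i: "i < Suc k" and j: "j < Suc k" by auto
    have "(P * Q * R) $$ (i,j) = (\<Sum>l<Suc k. (P * Q) $$ (i,l) * R $$ (l,j))" using mult_entry[OF PQ Rc] i j by simp
    also have "\<dots> = 0"
    proof (rule sum.neutral, intro ballI)
      fix l assume l: "l \<in> {..<Suc k}"
      show "(P * Q) $$ (i,l) * R $$ (l,j) = 0"
      proof (rule ccontr)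
        assume "(P * Q) $$ (i,l) * R $$ (l,j) \<noteq> 0"
        then have a: "(P * Q) $$ (i,l) \<noteq> 0" and b: "R $$ (l,j) \<noteq> 0" by auto
        from inS0_prod[OF P Q i _ a] l have "l = 0" by auto
        with b R j k show False unfolding inS0_def by auto
      qed
    qed
    finally show "(P * Q * R) $$ (i,j) = 0\<^sub>m (Suc k) (Suc k) $$ (i,j)" using i j by simp
  qed (use Pc Qc Rc in auto)
qed



lemma conj_mult: fixes Q Qi a b :: "complex mat"
  assumes Q: "Q \<in> carrier_mat N N" and Qi: "Qi \<in> carrier_mat N N" and QQi: "Q * Qi = 1\<^sub>m N"
  and a: "a \<in> carrier_mat N N" and b: "b \<in> carrier_mat N N"
  shows "Qi * (a * b) * Q = (Qi * a * Q) * (Qi * b * Q)"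
proof -
  have Qia: "Qi * a \<in> carrier_mat N N" using Qi a by simp
  have Qib: "Qi * b \<in> carrier_mat N N" using Qi b by simp
  have bQ: "b * Q \<in> carrier_mat N N" using Q b by simp
  have "(Qi * a * Q) * (Qi * b * Q) = (Qi * a) * (Q * (Qi * b * Q))"
    by (rule assoc_mult_mat[OF Qia Q mult_carrier_mat[OF Qib Q]])
  also have "Q * (Qi * b * Q) = Q * (Qi * (b * Q))" using assoc_mult_mat[OF Qi b Q] by simp
  also have "\<dots> = (Q * Qi) * (b * Q)" using assoc_mult_mat[OF Q Qi bQ] by simp
  also have "\<dots> = b * Q" using QQi left_mult_one_mat[OF bQ] by simp
  also have "(Qi * a) * (b * Q) = Qi * (a * (b * Q))" using assoc_mult_mat[OF Qi a bQ] by simp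
  also have "\<dots> = Qi * (a * b * Q)" using assoc_mult_mat[OF a b Q] by simp
  also have "\<dots> = Qi * (a * b) * Q" using assoc_mult_mat[OF Qi _ Q, of "a * b"] a b by simp
  finally show ?thesis by simp
qed

lemma conj_add: fixes Q Qi a b :: "complex mat"
  assumes Q: "Q \<in> carrier_mat N N" and Qi: "Qi \<in> carrier_mat N N"
  and a: "a \<in> carrier_mat N N" and b: "b \<in> carrier_mat N N"
  shows "Qi * (a + b) * Q = Qi * a * Q + Qi * b * Q"
proof -
  have "Qi * (a + b) = Qi * a + Qi * b" by (rule mult_add_distrib_mat[OF Qi a b])
  then have "Qi * (a + b) * Q = (Qi * a + Qi * b) * Q" by simp
  also have "\<dots> = Qi * a * Q + Qi * b * Q" by (rule add_mult_distrib_mat) (use Qi a b Q in auto)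
  finally show ?thesis .
qed

lemma conj_smult: fixes Q Qi a :: "complex mat"
  assumes Q: "Q \<in> carrier_mat N N" and Qi: "Qi \<in> carrier_mat N N"
  and a: "a \<in> carrier_mat N N"
  shows "Qi * (c \<cdot>\<^sub>m a) * Q = c \<cdot>\<^sub>m (Qi * a * Q)"
proof -
  have "Qi * (c \<cdot>\<^sub>m a) = c \<cdot>\<^sub>m (Qi * a)" by (rule mult_smult_distrib[OF Qi a])
  then have "Qi * (c \<cdot>\<^sub>m a) * Q = (c \<cdot>\<^sub>m (Qi * a)) * Q" by simp
  also have "\<dots> = c \<cdot>\<^sub>m (Qi * a * Q)" by (rule mult_smult_assoc_mat) (use Qi a Q in auto)
  finally show ?thesis .
qed

lemma conj_back: fixes Q Qi z :: "complex mat"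
  assumes Q: "Q \<in> carrier_mat N N" and Qi: "Qi \<in> carrier_mat N N" and QQi: "Q * Qi = 1\<^sub>m N"
  and z: "z \<in> carrier_mat N N"
  shows "Q * (Qi * z * Q) * Qi = z"
proof -
  have zQ: "z * Q \<in> carrier_mat N N" using z Q by simp
  have "Q * (Qi * z * Q) = Q * (Qi * (z * Q))" using assoc_mult_mat[OF Qi z Q] by simp
  also have "\<dots> = (Q * Qi) * (z * Q)" using assoc_mult_mat[OF Q Qi zQ] by simp
  also have "\<dots> = z * Q" using QQi left_mult_one_mat[OF zQ] by simp
  finally have "Q * (Qi * z * Q) * Qi = z * Q * Qi" by simp
  also have "\<dots> = z * (Q * Qi)" using assoc_mult_mat[OF z Q Qi] by simp
  also have "\<dots> = z" using QQi z by simp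
  finally show ?thesis .
qed

lemma struct:
  assumes n1: "n \<ge> 1" and ta: "tautological_algebra n A" and mx: "maximal_ideal (2*n+2) A m"
    and sb: "symplectic_basis n m X t" and sm: "structure_matrix n X t M"
  shows "halg n A m X t M"
proof -
  obtain \<rho> where ts: "taut_structure n \<rho>" and Adef: "A = assoc_alg n \<rho>"
    using ta unfolding tautological_algebra_def by blast
  have rc: "\<And>g. g \<in> heis n \<Longrightarrow> \<rho> g \<in> carrier_mat (2*n+2) (2*n+2)"
    using ts unfolding taut_structure_def heis_structure_def Let_def by blast
  obtain Q Qi L where Qc: "Q \<in> carrier_mat (2*n+2) (2*n+2)" and Qic: "Qi \<in> carrier_mat (2*n+2) (2*n+2)"
    and QQi: "Q * Qi = 1\<^sub>m (2*n+2)" and QiQ: "Qi * Q = 1\<^sub>m (2*n+2)"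
    and R: "\<forall>g \<in> heis n. (\<forall>i < 2*n+2-1. (Qi * \<rho> g * Q) $$ (i, 2*n+2-1) = 0) \<and>
                 (\<exists>c. c \<noteq> 0 \<and> (\<forall>i < 2*n+2-1. \<forall>j < 2*n+2-1.
                        (Qi * \<rho> g * Q) $$ (i,j) = c * taut_mat n (L *\<^sub>v fst g) $$ (i,j)))"
    using ts unfolding taut_structure_def Let_def by blast
  define k where "k = 2*n+1"
  have Nk: "2*n+2 = Suc k" unfolding k_def by simp
  have k0: "0 < k" unfolding k_def by simp
  have genS: "inS k (Qi * \<rho> g * Q)" if g: "g \<in> heis n" for g
  proof -
    have c: "Qi * \<rho> g * Q \<in> carrier_mat (Suc k) (Suc k)" using Qc Qic rc[OF g] Nk by simp
    have l: "\<forall>i<k. (Qi * \<rho> g * Q) $$ (i,k) = 0" using R g unfolding k_def by simp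
    have "\<exists>c. c \<noteq> 0 \<and> (\<forall>i < 2*n+2-1. \<forall>j < 2*n+2-1.
                        (Qi * \<rho> g * Q) $$ (i,j) = c * taut_mat n (L *\<^sub>v fst g) $$ (i,j))"
      using R g by blast
    then obtain cc where cc': "\<forall>i < 2*n+2-1. \<forall>j < 2*n+2-1.
                        (Qi * \<rho> g * Q) $$ (i,j) = cc * taut_mat n (L *\<^sub>v fst g) $$ (i,j)" by blast
    then have cc: "\<forall>i < k. \<forall>j < k. (Qi * \<rho> g * Q) $$ (i,j) = cc * taut_mat n (L *\<^sub>v fst g) $$ (i,j)"
      unfolding k_def by simp
    have o: "\<forall>i<k. \<forall>j<k. i \<noteq> j \<and> j \<noteq> 0 \<longrightarrow> (Qi * \<rho> g * Q) $$ (i,j) = 0"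
      using cc unfolding taut_mat_def k_def by auto
    have d: "\<forall>i<k. (Qi * \<rho> g * Q) $$ (i,i) = cc"
      using cc unfolding taut_mat_def k_def by auto
    show ?thesis unfolding inS_def using c l o d by blast
  qed
  let ?B = "\<lambda>z. Qi * z * Q"
  have AS: "z \<in> carrier_mat (2*n+2) (2*n+2) \<and> inS k (?B z)" if z: "z \<in> A" for z
    using z unfolding Adef assoc_alg_def
  proof (induction rule: alg_gen.induct)
    case ag_one
    then show ?case using QiQ Qic Nk by (simp add: inS_one)
  next
    case (ag_gen a)
    then obtain c g where a: "a = c \<cdot>\<^sub>m \<rho> g" and g: "g \<in> heis n" by blast
    have "?B a = c \<cdot>\<^sub>m ?B (\<rho> g)" unfolding a by (rule conj_smult[OF Qc Qic rc[OF g]])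
    then show ?case using genS[OF g] inS_smult a rc[OF g] by simp
  next
    case (ag_add a b)
    then show ?case using conj_add[OF Qc Qic] inS_add by simp
  next
    case (ag_smult a c)
    then show ?case using conj_smult[OF Qc Qic] inS_smult by simp
  next
    case (ag_mult a b)
    then have "a * b \<in> carrier_mat (2*n+2) (2*n+2)" using mult_carrier_mat by blast
    then show ?case using ag_mult conj_mult[OF Qc Qic QQi] inS_mult[OF _ _ k0] by simp
  qed
  have G: "A = alg_gen (2*n+2) {c \<cdot>\<^sub>m \<rho> g | c g. c \<noteq> 0 \<and> g \<in> heis n}"
    unfolding Adef assoc_alg_def by simp
  have A1: "1\<^sub>m (2*n+2) \<in> A" unfolding G by (rule alg_gen.ag_one)
  have Aadd: "x \<in> A \<Longrightarrow> y \<in> A \<Longrightarrow> x + y \<in> A" for x y unfolding G by (rule alg_gen.ag_add)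
  have Asm: "x \<in> A \<Longrightarrow> c \<cdot>\<^sub>m x \<in> A" for x c unfolding G by (rule alg_gen.ag_smult)
  have Amul: "x \<in> A \<Longrightarrow> y \<in> A \<Longrightarrow> x * y \<in> A" for x y unfolding G by (rule alg_gen.ag_mult)
  have Ac: "x \<in> A \<Longrightarrow> x \<in> carrier_mat (2*n+2) (2*n+2)" for x using AS by blast
  have AB: "x \<in> A \<Longrightarrow> inS k (?B x)" for x using AS by blast
  define r where "r z = (Qi * z * Q) $$ (k,k)" for z
  define a0 where "a0 z = (Qi * z * Q) $$ (0,0)" for z
  have kN: "k < 2*n+2" "0 < 2*n+2" unfolding k_def by auto
  have rmul: "r (x * y) = r x * r y" if "x \<in> A" "y \<in> A" for x y
    unfolding r_def using conj_mult[OF Qc Qic QQi Ac Ac, OF that] inS_mult_last[OF AB AB, OF that] by simp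
  have amul: "a0 (x * y) = a0 x * a0 y" if "x \<in> A" "y \<in> A" for x y
    unfolding a0_def using conj_mult[OF Qc Qic QQi Ac Ac, OF that] inS_mult_diag[OF AB AB _ k0, OF that k0] by simp
  have radd: "r (x + y) = r x + r y" if "x \<in> A" "y \<in> A" for x y
    unfolding r_def using conj_add[OF Qc Qic Ac Ac, OF that] Qc Qic Ac[OF that(2)] kN by simp
  have aadd: "a0 (x + y) = a0 x + a0 y" if "x \<in> A" "y \<in> A" for x y
    unfolding a0_def using conj_add[OF Qc Qic Ac Ac, OF that] Qc Qic Ac[OF that(2)] kN by simp
  have rsm: "r (c \<cdot>\<^sub>m x) = c * r x" if "x \<in> A" for x c
    unfolding r_def using conj_smult[OF Qc Qic Ac, OF that] Qc Qic Ac[OF that] kN by simp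
  have asm: "a0 (c \<cdot>\<^sub>m x) = c * a0 x" if "x \<in> A" for x c
    unfolding a0_def using conj_smult[OF Qc Qic Ac, OF that] Qc Qic Ac[OF that] kN by simp
  have r1: "r (1\<^sub>m (2*n+2)) = 1" unfolding r_def using QiQ Qic kN by simp
  have idl: "two_sided_ideal (2*n+2) A m" using mx unfolding maximal_ideal_def by blast
  have mA: "m \<subseteq> A" using idl unfolding two_sided_ideal_def by blast
  have Xc: "i < 2*n \<Longrightarrow> X i \<in> carrier_mat (2*n+2) (2*n+2)" for i
    using sb unfolding symplectic_basis_def Let_def by auto
  have tc: "t \<in> carrier_mat (2*n+2) (2*n+2)"
    using sb unfolding symplectic_basis_def Let_def by auto
  have m_def: "m = {msum (2*n+2) (\<lambda>i. c i \<cdot>\<^sub>m X i) (2*n) + d \<cdot>\<^sub>m t | c d. True}"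
    using sb unfolding symplectic_basis_def Let_def by blast
  have comm: "i < 2*n \<Longrightarrow> j < 2*n \<Longrightarrow> X i * X j - X j * X i = omega n i j \<cdot>\<^sub>m t" for i j
    using sb unfolding symplectic_basis_def Let_def by blast
  have XX: "i < 2*n \<Longrightarrow> j < 2*n \<Longrightarrow> X i * X j = M $$ (i,j) \<cdot>\<^sub>m t" for i j
    using sm unfolding structure_matrix_def by blast
  have in_m_I: "msum (2*n+2) (\<lambda>i. c i \<cdot>\<^sub>m X i) (2*n) + d \<cdot>\<^sub>m t \<in> m" for c d
    unfolding m_def by blast
  have Xm: "X i \<in> m" if i: "i < 2*n" for i
  proof -
    have "msum (2*n+2) (\<lambda>j. (if j = i then 1 else 0) \<cdot>\<^sub>m X j) (2*n) = (if i = i then 1 else 0) \<cdot>\<^sub>m X i"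
      by (rule msum_delta) (use i Xc in \<open>auto intro: smult0_mat\<close>)
    then have "msum (2*n+2) (\<lambda>j. (if j = i then 1 else 0) \<cdot>\<^sub>m X j) (2*n) = X i" by simp
    then have "X i = msum (2*n+2) (\<lambda>j. (if j = i then 1 else 0) \<cdot>\<^sub>m X j) (2*n) + 0 \<cdot>\<^sub>m t"
      using i Xc[OF i] tc by (intro eq_matI) auto
    then show ?thesis using in_m_I[of "\<lambda>j. if j = i then 1 else 0" 0] by simp
  qed
  have XA: "i < 2*n \<Longrightarrow> X i \<in> A" for i using Xm mA by blast
  have t_eq: "t = X 0 * X n - X n * X 0"
  proof -
    have "X 0 * X n - X n * X 0 = omega n 0 n \<cdot>\<^sub>m t" using comm[of 0 n] n1 by simp
    also have "omega n 0 n = 1" using n1 unfolding omega_def by simp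
    finally show ?thesis by simp
  qed
  have n0: "0 < 2*n" "n < 2*n" using n1 by auto
  have X0c: "X 0 \<in> carrier_mat (2*n+2) (2*n+2)" "X n \<in> carrier_mat (2*n+2) (2*n+2)" using Xc n0 by auto
  have eqt: "X 0 * X n = t + X n * X 0"
    unfolding t_eq using X0c by (intro eq_matI) auto
  have tA: "t \<in> A"
  proof -
    have "t = X 0 * X n + (-1) \<cdot>\<^sub>m (X n * X 0)" unfolding t_eq using X0c by (intro eq_matI) auto
    then show ?thesis using Aadd Asm Amul XA n0 by simp
  qed
  have rt: "r t = 0" and at: "a0 t = 0"
  proof -
    have "r (X 0 * X n) = r t + r (X n * X 0)" unfolding eqt using radd tA Amul XA n0 by simp
    then show "r t = 0" using rmul XA n0 by simp
    have "a0 (X 0 * X n) = a0 t + a0 (X n * X 0)" unfolding eqt using aadd tA Amul XA n0 by simp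
    then show "a0 t = 0" using amul XA n0 by simp
  qed
  have rX: "r (X i) = 0 \<and> a0 (X i) = 0" if i: "i < 2*n" for i
  proof -
    have "r (X i) * r (X i) = M $$ (i,i) * r t" using rmul[OF XA XA, OF i i] XX[OF i i] rsm[OF tA] by simp
    moreover have "a0 (X i) * a0 (X i) = M $$ (i,i) * a0 t" using amul[OF XA XA, OF i i] XX[OF i i] asm[OF tA] by simp
    ultimately show ?thesis using rt at by simp
  qed
  have A0: "0\<^sub>m (2*n+2) (2*n+2) \<in> A"
  proof -
    have "0\<^sub>m (2*n+2) (2*n+2) = (0::complex) \<cdot>\<^sub>m 1\<^sub>m (2*n+2)" by (rule smult0_mat[symmetric]) simp
    then show ?thesis using Asm A1 by metis
  qed
  have r0: "r (0\<^sub>m (2*n+2) (2*n+2)) = 0 \<and> a0 (0\<^sub>m (2*n+2) (2*n+2)) = 0"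
  proof -
    have e: "(0::complex) \<cdot>\<^sub>m 1\<^sub>m (2*n+2) = 0\<^sub>m (2*n+2) (2*n+2)" by (rule smult0_mat) simp
    show ?thesis using rsm[OF A1, of 0] asm[OF A1, of 0] unfolding e by simp
  qed
  have mS: "w \<in> A \<and> r w = 0 \<and> a0 w = 0" if w: "w \<in> m" for w
  proof -
    let ?S = "{w \<in> A. r w = 0 \<and> a0 w = 0}"
    obtain c d where wd: "w = msum (2*n+2) (\<lambda>i. c i \<cdot>\<^sub>m X i) (2*n) + d \<cdot>\<^sub>m t" using w unfolding m_def by blast
    have "msum (2*n+2) (\<lambda>i. c i \<cdot>\<^sub>m X i) (2*n) \<in> ?S"
    proof (rule msum_closed)
      show "0\<^sub>m (2*n+2) (2*n+2) \<in> ?S" using A0 r0 by simp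
      show "a + b \<in> ?S" if "a \<in> ?S" "b \<in> ?S" for a b using that Aadd radd aadd by simp
      show "c i \<cdot>\<^sub>m X i \<in> ?S" if "i < 2*n" for i using that Asm XA rsm asm rX by simp
    qed
    moreover have "d \<cdot>\<^sub>m t \<in> ?S" using Asm tA rsm asm rt at by simp
    ultimately show ?thesis unfolding wd using Aadd radd aadd by simp
  qed
  have m3: "\<forall>a\<in>m. \<forall>b\<in>m. \<forall>c\<in>m. a * b * c = 0\<^sub>m (2*n+2) (2*n+2)"
  proof (intro ballI)
    fix a b c assume a: "a \<in> m" and b: "b \<in> m" and c: "c \<in> m"
    have aA: "a \<in> A" and bA: "b \<in> A" and cA: "c \<in> A" using mS a b c by auto
    have S0: "inS0 k (?B x)" if "x \<in> m" for x
      using inS_inS0[OF AB] mS[OF that] unfolding r_def a0_def by blast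
    have "?B (a * b * c) = ?B a * ?B b * ?B c"
      using conj_mult[OF Qc Qic QQi] Ac aA bA cA Amul by simp
    also have "\<dots> = 0\<^sub>m (Suc k) (Suc k)" by (rule inS0_triple[OF S0 S0 S0 k0]) (use a b c in auto)
    finally have "?B (a * b * c) = 0\<^sub>m (2*n+2) (2*n+2)" using Nk by simp
    then have "Q * ?B (a * b * c) * Qi = 0\<^sub>m (2*n+2) (2*n+2)" using Qc Qic by simp
    then show "a * b * c = 0\<^sub>m (2*n+2) (2*n+2)"
      using conj_back[OF Qc Qic QQi] Ac Amul aA bA cA by simp
  qed
  define J where "J = {w \<in> A. r w = 0}"
  have Jid: "two_sided_ideal (2*n+2) A J"
    unfolding two_sided_ideal_def J_def using A0 r0 Aadd radd Asm rsm Amul rmul by auto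
  have mJ: "m \<subseteq> J" unfolding J_def using mS by auto
  have JA: "J \<noteq> A"
  proof
    assume "J = A"
    then have "1\<^sub>m (2*n+2) \<in> J" using A1 by simp
    then show False unfolding J_def using r1 by simp
  qed
  have Jm: "J = m" using mx Jid mJ JA unfolding maximal_ideal_def by blast
  have one_notin: "1\<^sub>m (2*n+2) \<notin> m" using mS r1 by auto
  have A_eq: "A = {c \<cdot>\<^sub>m 1\<^sub>m (2*n+2) + w | c w. w \<in> m}"
  proof
    show "A \<subseteq> {c \<cdot>\<^sub>m 1\<^sub>m (2*n+2) + w | c w. w \<in> m}"
    proof
      fix z assume z: "z \<in> A"
      define w where "w = z + (- r z) \<cdot>\<^sub>m 1\<^sub>m (2*n+2)"
      have wA: "w \<in> A" unfolding w_def using Aadd Asm A1 z by simp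
      have "r w = 0" unfolding w_def using radd[OF z] Asm[OF A1] rsm[OF A1] r1 by simp
      then have "w \<in> m" using wA Jm unfolding J_def by blast
      moreover have "z = r z \<cdot>\<^sub>m 1\<^sub>m (2*n+2) + w" unfolding w_def using Ac[OF z] by (intro eq_matI) auto
      ultimately show "z \<in> {c \<cdot>\<^sub>m 1\<^sub>m (2*n+2) + w | c w. w \<in> m}" by blast
    qed
  next
    show "{c \<cdot>\<^sub>m 1\<^sub>m (2*n+2) + w | c w. w \<in> m} \<subseteq> A"
      using Aadd Asm A1 mA by blast
  qed
  show ?thesis
    by (unfold_locales) (use n1 sb sm idl one_notin A_eq m3 in auto)
qed


theorem lemma3p8:
  fixes n :: nat and A1 A2 m1 m2 :: "complex mat set"
    and X1 X2 :: "nat \<Rightarrow> complex mat" and t1 t2 M1 M2 :: "complex mat"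
  assumes "n \<ge> 1"
    and "tautological_algebra n A1" and "tautological_algebra n A2"
    and "maximal_ideal (2*n+2) A1 m1" and "maximal_ideal (2*n+2) A2 m2"
    and "symplectic_basis n m1 X1 t1" and "symplectic_basis n m2 X2 t2"
    and "structure_matrix n X1 t1 M1" and "structure_matrix n X2 t2 M2"
  shows "alg_iso (2*n+2) A1 A2 \<longleftrightarrow>
    (\<exists>C \<in> carrier_mat (2*n) (2*n). invertible_mat C \<and> M1 = C * M2 * transpose_mat C)"
proof -
  have H1: "halg n A1 m1 X1 t1 M1" by (rule struct) (use assms in auto)
  have H2: "halg n A2 m2 X2 t2 M2" by (rule struct) (use assms in auto)
  show ?thesis using C_from_iso[OF H1 H2] iso_from_C[OF H1 H2] by blast
qed

end
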